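(* Let $g\ge2$. For a stable weighted graph ${\bf G}$ of genus $g$ (no markings) and a vertex $v$, put $\chi(v)=2w(v)-2+\mathrm{val}(v)$, and let ${\bf G}_v$ be the $1$-marked graph obtained by marking $v$. The linear maps $[{\bf G},\omega]\mapsto\sum_{v\in V({\bf G})}\chi(v)[{\bf G}_v,\omega]$ define a homomorphism of cellular chain complexes $t\colon C_*(\Delta_g;\mathbb Q)\to C_*(\Delta_{g,1};\mathbb Q)$. It carries the subcomplex spanned by graphs with a vertex of positive weight into the corresponding subcomplex, hence descends to a chain map $G^{(g)}\to G^{(g,1)}$ (via the identifications of the quotients with graph complexes, shifted by $2g-1$), and the induced maps $\widetilde H_k(\Delta_g;\mathbb Q)\to\widetilde H_k(\Delta_{g,1};\mathbb Q)$ and $H_k(G^{(g)})\to H_k(G^{(g,1)})$ are injective for all $k$.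
   Context: $\Delta_{g,n}$ ($\Delta_g=\Delta_{g,0}$) is the symmetric $\Delta$-complex whose $p$-simplices are isomorphism classes of $({\bf G},\omega)$: ${\bf G}=(G,m,w)$ a connected graph (loops, parallel edges allowed) with weights $w\colon V(G)\to\mathbb Z_{\ge0}$, marking $m\colon\{1,\dots,n\}\to V(G)$, $b_1(G)+\sum w=g$, stable ($2w(v)-2+\mathrm{val}(v)>0$, val counting half-edges with loops twice plus markings), and $\omega\colon E(G)\to\{0,\dots,p\}$ a bijection; faces contract edges with omitted labels (weights add; contracting a loop adds $1$). Its cellular chain complex $C_*(\Delta_{g,n};\mathbb Q)$ has generators $[{\bf G},\omega]$ in degree $|E(G)|-1$ with $[{\bf G},\omega]=\mathrm{sgn}(\sigma)[{\bf G}',\omega']$ under isomorphisms relating orders by $\sigma$, differential $\sum_i(-1)^i[{\bf G}/\omega^{-1}(i),\omega|]$, computing reduced rational homology. $G^{(g,n)}$ is the marked graph complex: the quotient of $C_*(\Delta_{g,n};\mathbb Q)$ by the subcomplex spanned by $[{\bf G},\omega]$ with some vertex of positive weight, regraded so that a graph with $e$ edges has degree $e-2g$ (loop contractions then contribute zero). *)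

theory Defs
  imports Complex_Main "HOL-Combinatorics.Permutations"
begin

text \<open>A weighted marked graph with ordered edges. Vertices are 0..<nV G.
  The edge list gives the edges in the order of their labels (edge with list
  index i has label i). Each edge is a pair of endpoints (unordered: only
  the set of endpoints matters; a loop has equal endpoints). The weight list
  has one entry per vertex; the mark list gives, for marking i+1, its vertex.\<close>
type_synonym lgraph = "(nat \<times> nat) list \<times> nat list \<times> nat list"

definition edgs :: "lgraph \<Rightarrow> (nat \<times> nat) list" where "edgs G = fst G"
definition wts :: "lgraph \<Rightarrow> nat list" where "wts G = fst (snd G)"
definition mks :: "lgraph \<Rightarrow> nat list" where "mks G = snd (snd G)"
definition nV :: "lgraph \<Rightarrow> nat" where "nV G = length (wts G)"
definition wt :: "lgraph \<Rightarrow> nat \<Rightarrow> nat" where "wt G v = wts G ! v"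
definition ends :: "nat \<times> nat \<Rightarrow> nat set" where "ends e = {fst e, snd e}"

definition val :: "lgraph \<Rightarrow> nat \<Rightarrow> nat" where
  "val G v = length (filter (\<lambda>e. fst e = v) (edgs G)) + length (filter (\<lambda>e. snd e = v) (edgs G))
            + length (filter (\<lambda>u. u = v) (mks G))"

definition adj :: "lgraph \<Rightarrow> (nat \<times> nat) set" where
  "adj G = {(a, b). (a, b) \<in> set (edgs G) \<or> (b, a) \<in> set (edgs G)}"

definition gconnected :: "lgraph \<Rightarrow> bool" where
  "gconnected G \<longleftrightarrow> (\<forall>v < nV G. (0, v) \<in> (adj G)\<^sup>*)"

text \<open>stable connected weighted graph of genus g with n markings;
  genus condition b1 + sum w = g with b1 = |E| - |V| + 1\<close>
definition valid :: "nat \<Rightarrow> nat \<Rightarrow> lgraph \<Rightarrow> bool" where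
  "valid g n G \<longleftrightarrow> nV G \<ge> 1 \<and> (\<forall>e\<in>set (edgs G). fst e < nV G \<and> snd e < nV G)
     \<and> length (mks G) = n \<and> (\<forall>u\<in>set (mks G). u < nV G) \<and> gconnected G
     \<and> length (edgs G) + 1 + sum_list (wts G) = g + nV G
     \<and> (\<forall>v < nV G. 2 * wt G v + val G v > 2)"

definition iso :: "lgraph \<Rightarrow> lgraph \<Rightarrow> (nat \<Rightarrow> nat) \<Rightarrow> (nat \<Rightarrow> nat) \<Rightarrow> bool" where
  "iso G G' p s \<longleftrightarrow> nV G' = nV G \<and> length (edgs G') = length (edgs G)
     \<and> bij_betw p {..<nV G} {..<nV G} \<and> s permutes {..<length (edgs G)}
     \<and> (\<forall>v < nV G. wt G' (p v) = wt G v)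
     \<and> length (mks G') = length (mks G) \<and> (\<forall>i < length (mks G). mks G' ! i = p (mks G ! i))
     \<and> (\<forall>i < length (edgs G). ends (edgs G' ! s i) = p ` ends (edgs G ! i))"

text \<open>contraction of the edge with label i; remaining edges keep their relative order
  (labels renormalised monotonically); a non-loop edge (a,b) merges b into a and
  vertices above b are shifted down by one\<close>
definition contract :: "lgraph \<Rightarrow> nat \<Rightarrow> lgraph" where
  "contract G i =
    (let a = fst (edgs G ! i); b = snd (edgs G ! i);
         es = take i (edgs G) @ drop (Suc i) (edgs G) in
     if a = b then (es, (wts G)[a := wts G ! a + 1], mks G)
     else (let f = (\<lambda>v. let v' = (if v = b then a else v) in if v' > b then v' - 1 else v') in
       (map (\<lambda>(x, y). (f x, f y)) es,
        map (\<lambda>j. sum_list (map (\<lambda>v. wts G ! v) (filter (\<lambda>v. f v = j) [0..<nV G]))) [0..<nV G - 1],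
        map f (mks G))))"

text \<open>rational chains: finitely supported functions on representatives\<close>
definition delta :: "lgraph \<Rightarrow> lgraph \<Rightarrow> rat" where
  "delta x = (\<lambda>y. if y = x then 1 else 0)"

definition lin :: "(lgraph \<Rightarrow> lgraph \<Rightarrow> rat) \<Rightarrow> (lgraph \<Rightarrow> rat) \<Rightarrow> (lgraph \<Rightarrow> rat)" where
  "lin F c = (\<lambda>y. \<Sum>x\<in>{x. c x \<noteq> 0}. c x * F x y)"

definition qspan :: "('a \<Rightarrow> rat) set \<Rightarrow> ('a \<Rightarrow> rat) set" where
  "qspan S = {c. \<exists>F a. finite F \<and> F \<subseteq> S \<and> c = (\<lambda>y. \<Sum>x\<in>F. a x * x y)}"

definition sadd :: "('a \<Rightarrow> rat) set \<Rightarrow> ('a \<Rightarrow> rat) set \<Rightarrow> ('a \<Rightarrow> rat) set" where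
  "sadd A B = {(\<lambda>y. x y + z y) | x z. x \<in> A \<and> z \<in> B}"

definition dgen :: "lgraph \<Rightarrow> lgraph \<Rightarrow> rat" where
  "dgen G = (\<lambda>y. \<Sum>i<length (edgs G). (-1) ^ i * delta (contract G i) y)"

definition chi :: "lgraph \<Rightarrow> nat \<Rightarrow> int" where
  "chi G v = 2 * int (wt G v) - 2 + int (val G v)"

definition markv :: "lgraph \<Rightarrow> nat \<Rightarrow> lgraph" where
  "markv G v = (edgs G, wts G, [v])"

definition tgen :: "lgraph \<Rightarrow> lgraph \<Rightarrow> rat" where
  "tgen G = (\<lambda>y. \<Sum>v<nV G. of_int (chi G v) * delta (markv G v) y)"

text \<open>free module on representatives with e edges (cellular degree e - 1)\<close>
definition chains :: "nat \<Rightarrow> nat \<Rightarrow> nat \<Rightarrow> (lgraph \<Rightarrow> rat) set" where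
  "chains g n e = qspan {delta G | G. valid g n G \<and> length (edgs G) = e}"

text \<open>relations [G,w] = sgn(s) [G',w']; C_* is the quotient chains/rels\<close>
definition rels :: "nat \<Rightarrow> nat \<Rightarrow> nat \<Rightarrow> (lgraph \<Rightarrow> rat) set" where
  "rels g n e = qspan {(\<lambda>y. delta G y - of_int (sign s) * delta G' y) | G G' p s.
                        valid g n G \<and> length (edgs G) = e \<and> iso G G' p s}"

definition posw :: "nat \<Rightarrow> nat \<Rightarrow> nat \<Rightarrow> (lgraph \<Rightarrow> rat) set" where
  "posw g n e = qspan {delta G | G. valid g n G \<and> length (edgs G) = e \<and> (\<exists>v < nV G. wt G v > 0)}"

definition bnd :: "nat \<Rightarrow> nat \<Rightarrow> nat \<Rightarrow> (lgraph \<Rightarrow> rat) set" where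
  "bnd g n e = lin dgen ` chains g n (Suc e)"

end

theory Submission
  imports Defs
begin

definition supp :: "('a \<Rightarrow> rat) \<Rightarrow> 'a set" where "supp c = {x. c x \<noteq> 0}"
abbreviation fs :: "('a \<Rightarrow> rat) \<Rightarrow> bool" where "fs c \<equiv> finite (supp c)"

lemma lin_eq:
  assumes "fs c" "finite S" "supp c \<subseteq> S"
  shows "lin F c y = (\<Sum>x\<in>S. c x * F x y)"
  unfolding lin_def
  by (rule sum.mono_neutral_left) (use assms in \<open>auto simp: supp_def\<close>)

lemma supp_add: "supp (\<lambda>y. c y + d y) \<subseteq> supp c \<union> supp d"
  by (auto simp: supp_def)

lemma fs_add: "fs c \<Longrightarrow> fs d \<Longrightarrow> fs (\<lambda>y. c y + d y)"
  by (rule finite_subset[OF supp_add]) auto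

lemma fs_scale: "fs c \<Longrightarrow> fs (\<lambda>y. r * c y)"
  by (rule rev_finite_subset) (auto simp: supp_def)

lemma fs_zero: "fs (\<lambda>_. 0)" by (simp add: supp_def)

lemma fs_delta: "fs (delta x)" by (simp add: supp_def delta_def)

lemma fs_sum: "finite A \<Longrightarrow> (\<And>x. x\<in>A \<Longrightarrow> fs (k x)) \<Longrightarrow> fs (\<lambda>y. \<Sum>x\<in>A. a x * k x y)"
proof (induction A rule: finite_induct)
  case empty then show ?case by (simp add: fs_zero)
next
  case (insert x A)
  have "fs (\<lambda>y. a x * k x y + (\<Sum>x\<in>A. a x * k x y))"
    by (rule fs_add) (use insert fs_scale in auto)
  then show ?case using insert by simp
qed

lemma lin_add:
  assumes "fs c" "fs d"
  shows "lin F (\<lambda>y. c y + d y) = (\<lambda>y. lin F c y + lin F d y)"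
proof
  fix y
  let ?S = "supp c \<union> supp d"
  have "lin F (\<lambda>y. c y + d y) y = (\<Sum>x\<in>?S. (c x + d x) * F x y)"
    by (rule lin_eq) (use assms supp_add[of c d] fs_add[OF assms] in auto)
  also have "\<dots> = (\<Sum>x\<in>?S. c x * F x y) + (\<Sum>x\<in>?S. d x * F x y)"
    by (simp add: distrib_right sum.distrib)
  also have "\<dots> = lin F c y + lin F d y"
  proof -
    have "lin F c y = (\<Sum>x\<in>?S. c x * F x y)" by (rule lin_eq) (use assms in auto)
    moreover have "lin F d y = (\<Sum>x\<in>?S. d x * F x y)" by (rule lin_eq) (use assms in auto)
    ultimately show ?thesis by simp
  qed
  finally show "lin F (\<lambda>y. c y + d y) y = lin F c y + lin F d y" .
qed

lemma lin_scale:
  assumes "fs c"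
  shows "lin F (\<lambda>y. r * c y) = (\<lambda>y. r * lin F c y)"
proof
  fix y
  have "lin F (\<lambda>y. r * c y) y = (\<Sum>x\<in>supp c. (r * c x) * F x y)"
    by (rule lin_eq) (use assms in \<open>auto simp: supp_def\<close>)
  also have "\<dots> = r * lin F c y"
    using assms by (simp add: lin_eq sum_distrib_left mult.assoc)
  finally show "lin F (\<lambda>y. r * c y) y = r * lin F c y" .
qed

lemma lin_zero: "lin F (\<lambda>_. 0) = (\<lambda>_. 0)"
  by (simp add: lin_def)

lemma lin_delta: "lin F (delta x) = F x"
proof
  fix y
  have "lin F (delta x) y = (\<Sum>z\<in>{x}. delta x z * F z y)"
    by (rule lin_eq) (auto simp: supp_def delta_def)
  then show "lin F (delta x) y = F x y" by (simp add: delta_def)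
qed

lemma lin_sum:
  assumes "finite A" "\<And>x. x\<in>A \<Longrightarrow> fs (k x)"
  shows "lin F (\<lambda>y. \<Sum>x\<in>A. a x * k x y) = (\<lambda>y. \<Sum>x\<in>A. a x * lin F (k x) y)"
  using assms
proof (induction A rule: finite_induct)
  case empty then show ?case by (simp add: lin_zero)
next
  case (insert x A)
  have "lin F (\<lambda>y. \<Sum>x\<in>insert x A. a x * k x y) = lin F (\<lambda>y. a x * k x y + (\<Sum>x\<in>A. a x * k x y))"
    using insert by simp
  also have "\<dots> = (\<lambda>y. lin F (\<lambda>y. a x * k x y) y + lin F (\<lambda>y. \<Sum>x\<in>A. a x * k x y) y)"
  proof (rule lin_add)
    show "fs (\<lambda>y. a x * k x y)" using insert fs_scale by auto
    show "fs (\<lambda>y. \<Sum>x\<in>A. a x * k x y)" by (rule fs_sum) (use insert in auto)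
  qed
  also have "\<dots> = (\<lambda>y. \<Sum>x\<in>insert x A. a x * lin F (k x) y)"
    using insert by (simp add: lin_scale)
  finally show ?case .
qed

lemma lin_fs:
  assumes "fs c" "\<And>x. fs (F x)"
  shows "fs (lin F c)"
proof -
  have "lin F c = (\<lambda>y. \<Sum>x\<in>supp c. c x * F x y)"
    by (rule ext, rule lin_eq) (use assms in auto)
  moreover have "fs (\<lambda>y. \<Sum>x\<in>supp c. c x * F x y)" by (rule fs_sum) (use assms in auto)
  ultimately show ?thesis by simp
qed

lemma lin_diff:
  assumes "fs c" "fs d"
  shows "lin F (\<lambda>y. c y - d y) = (\<lambda>y. lin F c y - lin F d y)"
proof -
  have "lin F (\<lambda>y. c y - d y) = lin F (\<lambda>y. c y + (-1)*d y)" by simp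
  also have "\<dots> = (\<lambda>y. lin F c y + lin F (\<lambda>y. (-1)*d y) y)" by (rule lin_add[OF assms(1) fs_scale[OF assms(2)]])
  also have "\<dots> = (\<lambda>y. lin F c y - lin F d y)" using lin_scale[OF assms(2), of F "-1"] by simp
  finally show ?thesis .
qed

lemma qspan_zero: "(\<lambda>_. 0) \<in> qspan S"
  unfolding qspan_def by (rule CollectI, rule exI[of _ "{}"]) auto

lemma qspan_induct[consumes 1, case_names zero step]:
  assumes "c \<in> qspan S" "P (\<lambda>_. 0)"
    "\<And>x r c. x \<in> S \<Longrightarrow> P c \<Longrightarrow> P (\<lambda>y. r * x y + c y)"
  shows "P c"
proof -
  obtain F a where F: "finite F" "F \<subseteq> S" "c = (\<lambda>y. \<Sum>x\<in>F. a x * x y)"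
    using assms(1) unfolding qspan_def by blast
  have "P (\<lambda>y. \<Sum>x\<in>F. a x * x y)" using F(1,2)
  proof (induction F rule: finite_induct)
    case empty then show ?case using assms(2) by simp
  next
    case (insert x F)
    then have "P (\<lambda>y. a x * x y + (\<Sum>x\<in>F. a x * x y))"
      using assms(3) by auto
    then show ?case using insert by simp
  qed
  then show ?thesis using F by simp
qed

lemma qspan_step: "x \<in> S \<Longrightarrow> c \<in> qspan S \<Longrightarrow> (\<lambda>y. r * x y + c y) \<in> qspan S"
proof -
  assume x: "x \<in> S" and c: "c \<in> qspan S"
  obtain F a where F: "finite F" "F \<subseteq> S" "c = (\<lambda>y. \<Sum>x\<in>F. a x * x y)"
    using c unfolding qspan_def by blast
  show ?thesis
  proof (cases "x \<in> F")
    case True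
    let ?a = "a(x := a x + r)"
    have "(\<lambda>y. r * x y + c y) = (\<lambda>y. \<Sum>z\<in>F. ?a z * z y)"
    proof
      fix y
      have "(\<Sum>z\<in>F. ?a z * z y) = ?a x * x y + (\<Sum>z\<in>F-{x}. ?a z * z y)"
        using F(1) True by (simp add: sum.remove)
      also have "(\<Sum>z\<in>F-{x}. ?a z * z y) = (\<Sum>z\<in>F-{x}. a z * z y)"
        by (rule sum.cong) auto
      also have "c y = a x * x y + (\<Sum>z\<in>F-{x}. a z * z y)"
        using F True by (simp add: sum.remove)
      ultimately show "r * x y + c y = (\<Sum>z\<in>F. ?a z * z y)" by (simp add: algebra_simps)
    qed
    then show ?thesis unfolding qspan_def using F x by blast
  next
    case False
    let ?a = "a(x := r)"
    have "(\<lambda>y. r * x y + c y) = (\<lambda>y. \<Sum>z\<in>insert x F. ?a z * z y)"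
    proof
      fix y
      have "(\<Sum>z\<in>F. ?a z * z y) = (\<Sum>z\<in>F. a z * z y)"
        by (rule sum.cong) (use False in auto)
      then show "r * x y + c y = (\<Sum>z\<in>insert x F. ?a z * z y)" using F False by simp
    qed
    moreover have "finite (insert x F)" "insert x F \<subseteq> S" using F x by auto
    ultimately show ?thesis unfolding qspan_def by blast
  qed
qed

lemma qspan_base: "x \<in> S \<Longrightarrow> x \<in> qspan S"
proof -
  assume "x \<in> S"
  then have "(\<lambda>y. 1 * x y + 0) \<in> qspan S" using qspan_step[of x S "\<lambda>_. 0" 1] qspan_zero by blast
  then show ?thesis by simp
qed

lemma qspan_add: "c \<in> qspan S \<Longrightarrow> d \<in> qspan S \<Longrightarrow> (\<lambda>y. c y + d y) \<in> qspan S"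
proof (induction c rule: qspan_induct)
  case zero then show ?case by simp
next
  case (step x r c)
  then have "(\<lambda>y. r * x y + (c y + d y)) \<in> qspan S" using qspan_step[of x S "\<lambda>y. c y + d y" r] by blast
  then show ?case by (simp add: add.assoc)
qed

lemma qspan_scale: "c \<in> qspan S \<Longrightarrow> (\<lambda>y. r * c y) \<in> qspan S"
proof (induction c rule: qspan_induct)
  case zero then show ?case by (simp add: qspan_zero)
next
  case (step x s c)
  then have "(\<lambda>y. (r*s) * x y + r * c y) \<in> qspan S" using qspan_step[of x S "\<lambda>y. r * c y" "r*s"] by blast
  then show ?case by (simp add: algebra_simps)
qed

lemma qspan_diff: "c \<in> qspan S \<Longrightarrow> d \<in> qspan S \<Longrightarrow> (\<lambda>y. c y - d y) \<in> qspan S"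
proof -
  assume "c \<in> qspan S" "d \<in> qspan S"
  then have "(\<lambda>y. c y + (-1) * d y) \<in> qspan S" using qspan_add[of c S "\<lambda>y. (-1) * d y"] qspan_scale[of d S "-1"] by blast
  then show ?thesis by simp
qed

lemma qspan_sum: "finite A \<Longrightarrow> (\<And>x. x\<in>A \<Longrightarrow> k x \<in> qspan S) \<Longrightarrow> (\<lambda>y. \<Sum>x\<in>A. a x * k x y) \<in> qspan S"
proof (induction A rule: finite_induct)
  case empty then show ?case by (simp add: qspan_zero)
next
  case (insert x A)
  then have "(\<lambda>y. a x * k x y + (\<Sum>x\<in>A. a x * k x y)) \<in> qspan S"
    by (intro qspan_add qspan_scale) auto
  then show ?case using insert by simp
qed

lemma qspan_eq0: "c = (\<lambda>_. 0) \<Longrightarrow> c \<in> qspan S" using qspan_zero by simp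

lemma qspan_fs: "c \<in> qspan S \<Longrightarrow> (\<And>x. x \<in> S \<Longrightarrow> fs x) \<Longrightarrow> fs c"
proof (induction c rule: qspan_induct)
  case zero then show ?case by (simp add: fs_zero)
next
  case (step x r c) then show ?case by (intro fs_add fs_scale) auto
qed

lemma lin_qspan:
  assumes "c \<in> qspan S" "\<And>x. x \<in> S \<Longrightarrow> fs x" "\<And>x. x \<in> S \<Longrightarrow> lin F x \<in> qspan T"
  shows "lin F c \<in> qspan T"
proof -
  have "fs c \<and> lin F c \<in> qspan T" using assms(1)
  proof (induction c rule: qspan_induct)
    case zero then show ?case by (simp add: lin_zero qspan_zero fs_zero)
  next
    case (step x r c)
    have fx: "fs x" using assms(2) step(1) .
    have fc: "fs c" "lin F c \<in> qspan T" using step(2) by auto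
    have "lin F (\<lambda>y. r * x y + c y) = (\<lambda>y. lin F (\<lambda>y. r * x y) y + lin F c y)"
      by (rule lin_add) (use fx fc fs_scale in auto)
    also have "\<dots> = (\<lambda>y. r * lin F x y + lin F c y)" using lin_scale[OF fx] by simp
    finally have e: "lin F (\<lambda>y. r * x y + c y) = (\<lambda>y. r * lin F x y + lin F c y)" .
    have "lin F (\<lambda>y. r * x y + c y) \<in> qspan T"
      unfolding e by (rule qspan_add[OF qspan_scale[OF assms(3)[OF step(1)]] fc(2)])
    moreover have "fs (\<lambda>y. r * x y + c y)" by (rule fs_add[OF fs_scale[OF fx] fc(1)])
    ultimately show ?case by (rule conjI[rotated])
  qed
  then show ?thesis by simp
qed


definition cmap :: "nat \<Rightarrow> nat \<Rightarrow> nat \<Rightarrow> nat" where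
  "cmap a b v = (let v' = (if v = b then a else v) in if v' > b then v' - 1 else v')"

definition vE :: "lgraph \<Rightarrow> nat \<Rightarrow> nat" where
  "vE G v = length (filter (\<lambda>e. fst e = v) (edgs G)) + length (filter (\<lambda>e. snd e = v) (edgs G))"
definition vM :: "lgraph \<Rightarrow> nat \<Rightarrow> nat" where
  "vM G v = length (filter (\<lambda>u. u = v) (mks G))"

lemma val_split: "val G v = vE G v + vM G v"
  by (simp add: val_def vE_def vM_def)

lemma edgs_simp[simp]: "edgs (E, W, M) = E" and wts_simp[simp]: "wts (E, W, M) = W"
  and mks_simp[simp]: "mks (E, W, M) = M"
  by (simp_all add: edgs_def wts_def mks_def)

lemma contract_nl:
  assumes "fst (edgs G ! i) \<noteq> snd (edgs G ! i)"
  shows "contract G i =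
    (map (\<lambda>(x, y). (cmap (fst (edgs G ! i)) (snd (edgs G ! i)) x, cmap (fst (edgs G ! i)) (snd (edgs G ! i)) y))
         (take i (edgs G) @ drop (Suc i) (edgs G)),
     map (\<lambda>j. sum_list (map (\<lambda>v. wts G ! v) (filter (\<lambda>v. cmap (fst (edgs G ! i)) (snd (edgs G ! i)) v = j) [0..<nV G]))) [0..<nV G - 1],
     map (cmap (fst (edgs G ! i)) (snd (edgs G ! i))) (mks G))"
  using assms unfolding contract_def cmap_def Let_def by simp

lemma contract_loop:
  assumes "fst (edgs G ! i) = snd (edgs G ! i)"
  shows "contract G i = (take i (edgs G) @ drop (Suc i) (edgs G),
      (wts G)[fst (edgs G ! i) := wts G ! fst (edgs G ! i) + 1], mks G)"
  using assms unfolding contract_def Let_def by simp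

lemma cmap_eq_iff:
  assumes "a \<noteq> b"
  shows "cmap a b x = cmap a b y \<longleftrightarrow> x = y \<or> (x \<in> {a, b} \<and> y \<in> {a, b})"
  using assms unfolding cmap_def Let_def by auto

lemma cmap_ab: "cmap a b b = cmap a b a"
  unfolding cmap_def Let_def by auto

lemma cmap_lt:
  assumes "a < n" "b < n" "a \<noteq> b" "x < n"
  shows "cmap a b x < n - 1"
  using assms unfolding cmap_def Let_def by auto

lemma cmap_surj:
  assumes "a < n" "b < n" "a \<noteq> b" "j < n - 1"
  shows "\<exists>x<n. x \<noteq> b \<and> cmap a b x = j"
proof (cases "j < b")
  case True
  then show ?thesis using assms by (intro exI[of _ j]) (auto simp: cmap_def Let_def)
next
  case False
  then show ?thesis using assms by (intro exI[of _ "Suc j"]) (auto simp: cmap_def Let_def)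
qed

lemma cmap_image:
  assumes "a < n" "b < n" "a \<noteq> b"
  shows "cmap a b ` {..<n} = {..<n-1}"
  using cmap_lt[OF assms] cmap_surj[OF assms] by fastforce

lemma cmap_fiber_card:
  assumes "a < n" "b < n" "a \<noteq> b" "j < n - 1"
  shows "card {v. v < n \<and> cmap a b v = j} = (if cmap a b a = j then 2 else 1)"
proof (cases "cmap a b a = j")
  case True
  have "{v. v < n \<and> cmap a b v = j} = {a, b}"
    using True assms cmap_eq_iff[OF assms(3)] by auto
  then show ?thesis using True assms by simp
next
  case False
  obtain x where x: "x < n" "cmap a b x = j" using cmap_surj[OF assms] by blast
  have "{v. v < n \<and> cmap a b v = j} = {x}"
    using False assms x cmap_eq_iff[OF assms(3)] by auto
  then show ?thesis using False by simp
qed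

lemma length_filter_fiber:
  assumes "\<forall>x\<in>set xs. h x < (n::nat)"
  shows "length (filter (\<lambda>x. f (h x) = j) xs) = (\<Sum>v\<in>{v. v < n \<and> f v = j}. length (filter (\<lambda>x. h x = v) xs))"
  using assms
proof (induction xs)
  case Nil then show ?case by simp
next
  case (Cons x xs)
  have fin: "finite {v. v < n \<and> f v = j}" by (rule finite_subset[of _ "{..<n}"]) auto
  have "(\<Sum>v\<in>{v. v < n \<and> f v = j}. length (filter (\<lambda>x. h x = v) (x # xs)))
      = (\<Sum>v\<in>{v. v < n \<and> f v = j}. (if h x = v then 1 else 0) + length (filter (\<lambda>x. h x = v) xs))"
    by (rule sum.cong) auto
  also have "\<dots> = (\<Sum>v\<in>{v. v < n \<and> f v = j}. (if h x = v then 1 else 0)) + (\<Sum>v\<in>{v. v < n \<and> f v = j}. length (filter (\<lambda>x. h x = v) xs))"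
    by (simp add: sum.distrib)
  also have "(\<Sum>v\<in>{v. v < n \<and> f v = j}. (if h x = v then 1 else 0)::nat) = (if f (h x) = j then 1 else 0)"
    using Cons.prems by (simp add: sum.delta[OF fin])
  finally show ?case using Cons by simp
qed

lemma length_filter_remove:
  assumes "i < length xs"
  shows "length (filter P xs) = length (filter P (take i xs @ drop (Suc i) xs)) + (if P (xs ! i) then 1 else 0)"
proof -
  have "xs = take i xs @ [xs ! i] @ drop (Suc i) xs" using assms by (simp add: id_take_nth_drop)
  then have "length (filter P xs) = length (filter P (take i xs @ [xs ! i] @ drop (Suc i) xs))" by simp
  then show ?thesis by simp
qed

lemma sum_list_filter_upt:
  "sum_list (map g (filter P [0..<n])) = (\<Sum>v\<in>{v. v < n \<and> P v}. g v)"
proof -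
  have "sum_list (map g (filter P [0..<n])) = sum g (set (filter P [0..<n]))"
    by (rule sum_list_distinct_conv_sum_set) simp
  also have "set (filter P [0..<n]) = {v. v < n \<and> P v}" by auto
  finally show ?thesis .
qed


definition bnds :: "lgraph \<Rightarrow> bool" where
  "bnds G \<longleftrightarrow> (\<forall>e\<in>set (edgs G). fst e < nV G \<and> snd e < nV G) \<and> (\<forall>u\<in>set (mks G). u < nV G)"

lemma valid_bnds: "valid g n G \<Longrightarrow> bnds G"
  by (simp add: valid_def bnds_def)

definition ea :: "lgraph \<Rightarrow> nat \<Rightarrow> nat" where "ea G i = fst (edgs G ! i)"
definition eb :: "lgraph \<Rightarrow> nat \<Rightarrow> nat" where "eb G i = snd (edgs G ! i)"

context
  fixes G :: lgraph and i :: nat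
  assumes bG: "bnds G" and iG: "i < length (edgs G)"
begin


lemma ea_lt: "ea G i < nV G" and eb_lt: "eb G i < nV G"
  using bG iG nth_mem[OF iG] unfolding bnds_def ea_def eb_def by auto

lemma len_contract: "length (edgs (contract G i)) = length (edgs G) - 1"
  using iG by (cases "ea G i = eb G i") (simp_all add: contract_nl contract_loop ea_def eb_def min_def)

lemma nl_nV: "ea G i \<noteq> eb G i \<Longrightarrow> nV (contract G i) = nV G - 1"
  by (simp add: contract_nl ea_def eb_def nV_def)

lemma nl_wt: "ea G i \<noteq> eb G i \<Longrightarrow> j < nV G - 1 \<Longrightarrow>
    wt (contract G i) j = (\<Sum>v\<in>{v. v < nV G \<and> cmap (ea G i) (eb G i) v = j}. wt G v)"
  by (simp add: contract_nl ea_def eb_def wt_def sum_list_filter_upt)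

lemma nl_vM: "ea G i \<noteq> eb G i \<Longrightarrow> vM (contract G i) j = (\<Sum>v\<in>{v. v < nV G \<and> cmap (ea G i) (eb G i) v = j}. vM G v)"
proof -
  assume ne: "ea G i \<noteq> eb G i"
  have "vM (contract G i) j = length (filter (\<lambda>u. cmap (ea G i) (eb G i) u = j) (mks G))"
    using ne by (simp add: contract_nl ea_def eb_def vM_def filter_map o_def)
  also have "\<dots> = (\<Sum>v\<in>{v. v < nV G \<and> cmap (ea G i) (eb G i) v = j}. length (filter (\<lambda>u. u = v) (mks G)))"
    using length_filter_fiber[of "mks G" "\<lambda>u. u" "nV G" "cmap (ea G i) (eb G i)" j] bG by (simp add: bnds_def)
  finally show ?thesis by (simp add: vM_def)
qed

lemma nl_vE: "ea G i \<noteq> eb G i \<Longrightarrow>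
   vE (contract G i) j + (if cmap (ea G i) (eb G i) (ea G i) = j then 2 else 0) = (\<Sum>v\<in>{v. v < nV G \<and> cmap (ea G i) (eb G i) v = j}. vE G v)"
proof -
  assume ne: "ea G i \<noteq> eb G i"
  let ?F = "cmap (ea G i) (eb G i)"
  let ?es = "take i (edgs G) @ drop (Suc i) (edgs G)"
  let ?S = "{v. v < nV G \<and> ?F v = j}"
  have e1: "vE (contract G i) j = length (filter (\<lambda>e. ?F (fst e) = j) ?es) + length (filter (\<lambda>e. ?F (snd e) = j) ?es)"
    using ne by (simp add: contract_nl ea_def eb_def vE_def filter_map o_def case_prod_beta)
  have f1: "length (filter (\<lambda>e. ?F (fst e) = j) (edgs G)) = length (filter (\<lambda>e. ?F (fst e) = j) ?es) + (if ?F (ea G i) = j then 1 else 0)"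
    using length_filter_remove[OF iG] by (simp add: ea_def)
  have f2: "length (filter (\<lambda>e. ?F (snd e) = j) (edgs G)) = length (filter (\<lambda>e. ?F (snd e) = j) ?es) + (if ?F (ea G i) = j then 1 else 0)"
    using length_filter_remove[OF iG] cmap_ab[of "ea G i" "eb G i"] by (simp add: eb_def)
  have s1: "length (filter (\<lambda>e. ?F (fst e) = j) (edgs G)) = (\<Sum>v\<in>?S. length (filter (\<lambda>e. fst e = v) (edgs G)))"
    using length_filter_fiber[of "edgs G" fst "nV G" ?F j] bG by (simp add: bnds_def)
  have s2: "length (filter (\<lambda>e. ?F (snd e) = j) (edgs G)) = (\<Sum>v\<in>?S. length (filter (\<lambda>e. snd e = v) (edgs G)))"
    using length_filter_fiber[of "edgs G" snd "nV G" ?F j] bG by (simp add: bnds_def)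
  show ?thesis using e1 f1 f2 s1 s2 by (simp add: vE_def sum.distrib)
qed

lemma lp_nV: "ea G i = eb G i \<Longrightarrow> nV (contract G i) = nV G"
  by (simp add: contract_loop ea_def eb_def nV_def)

lemma lp_wt: "ea G i = eb G i \<Longrightarrow> j < nV G \<Longrightarrow> wt (contract G i) j = wt G j + (if j = ea G i then 1 else 0)"
  using ea_lt by (simp add: contract_loop ea_def eb_def wt_def nV_def nth_list_update)

lemma lp_vM: "ea G i = eb G i \<Longrightarrow> vM (contract G i) j = vM G j"
  by (simp add: contract_loop ea_def eb_def vM_def)

lemma lp_vE: "ea G i = eb G i \<Longrightarrow> vE (contract G i) j + (if j = ea G i then 2 else 0) = vE G j"
proof -
  assume e: "ea G i = eb G i"
  let ?es = "take i (edgs G) @ drop (Suc i) (edgs G)"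
  have "length (filter (\<lambda>e. fst e = j) (edgs G)) = length (filter (\<lambda>e. fst e = j) ?es) + (if ea G i = j then 1 else 0)"
    using length_filter_remove[OF iG] by (simp add: ea_def)
  moreover have "length (filter (\<lambda>e. snd e = j) (edgs G)) = length (filter (\<lambda>e. snd e = j) ?es) + (if ea G i = j then 1 else 0)"
    using length_filter_remove[OF iG] e by (simp add: eb_def)
  ultimately show ?thesis using e by (auto simp: contract_loop ea_def eb_def vE_def)
qed

end


lemma chi_alt: "chi G v = 2 * int (wt G v) - 2 + int (vE G v) + int (vM G v)"
  by (simp add: chi_def val_split)

lemma chi_nl:
  assumes bG: "bnds G" and iG: "i < length (edgs G)" and ne: "ea G i \<noteq> eb G i" and j: "j < nV G - 1"
  shows "chi (contract G i) j = (\<Sum>v\<in>{v. v < nV G \<and> cmap (ea G i) (eb G i) v = j}. chi G v)"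
proof -
  let ?S = "{v. v < nV G \<and> cmap (ea G i) (eb G i) v = j}"
  have fin: "finite ?S" by (rule finite_subset[of _ "{..<nV G}"]) auto
  have w: "wt (contract G i) j = (\<Sum>v\<in>?S. wt G v)" using nl_wt[OF bG iG ne j] .
  have e: "vE (contract G i) j + (if cmap (ea G i) (eb G i) (ea G i) = j then 2 else 0) = (\<Sum>v\<in>?S. vE G v)"
    using nl_vE[OF bG iG ne] .
  have m: "vM (contract G i) j = (\<Sum>v\<in>?S. vM G v)" using nl_vM[OF bG iG ne] .
  have c: "card ?S = (if cmap (ea G i) (eb G i) (ea G i) = j then 2 else 1)"
    using cmap_fiber_card[OF ea_lt[OF bG iG] eb_lt[OF bG iG] ne j] .
  have "(\<Sum>v\<in>?S. chi G v) = (\<Sum>v\<in>?S. 2 * int (wt G v) + int (vE G v) + int (vM G v) - 2)"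
    by (rule sum.cong) (auto simp: chi_alt)
  also have "\<dots> = 2 * int (\<Sum>v\<in>?S. wt G v) + int (\<Sum>v\<in>?S. vE G v) + int (\<Sum>v\<in>?S. vM G v) - 2 * int (card ?S)"
    by (simp add: sum.distrib sum_subtractf sum_distrib_left)
  finally show ?thesis
  proof -
    have e': "int (vE (contract G i) j) + (if cmap (ea G i) (eb G i) (ea G i) = j then 2 else 0) = int (\<Sum>v\<in>?S. vE G v)"
      using arg_cong[OF e, of int] by (cases "cmap (ea G i) (eb G i) (ea G i) = j") simp_all
    show "(\<Sum>v\<in>?S. chi G v) = 2 * int (\<Sum>v\<in>?S. wt G v) + int (\<Sum>v\<in>?S. vE G v) + int (\<Sum>v\<in>?S. vM G v) - 2 * int (card ?S) \<Longrightarrow>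
      chi (contract G i) j = (\<Sum>v\<in>?S. chi G v)"
      using w e' m c by (auto simp: chi_alt split: if_splits)
  qed
qed

lemma chi_lp:
  assumes bG: "bnds G" and iG: "i < length (edgs G)" and eq: "ea G i = eb G i" and j: "j < nV G"
  shows "chi (contract G i) j = chi G j"
  using lp_wt[OF bG iG eq j] lp_vE[OF bG iG eq, of j] lp_vM[OF bG iG eq, of j]
  by (auto simp: chi_alt split: if_splits)

definition cf :: "lgraph \<Rightarrow> nat \<Rightarrow> nat \<Rightarrow> nat" where
  "cf G i v = (if ea G i = eb G i then v else cmap (ea G i) (eb G i) v)"

lemma nV_markv[simp]: "nV (markv G v) = nV G" and edgs_markv[simp]: "edgs (markv G v) = edgs G"
  and wts_markv[simp]: "wts (markv G v) = wts G"
  by (simp_all add: markv_def nV_def)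

lemma contract_markv: "contract (markv G v) i = markv (contract G i) (cf G i v)"
proof (cases "fst (edgs G ! i) = snd (edgs G ! i)")
  case True
  then show ?thesis
    using contract_loop[of "markv G v" i] contract_loop[of G i]
    by (simp add: cf_def ea_def eb_def markv_def nV_def)
next
  case False
  then show ?thesis
    using contract_nl[of "markv G v" i] contract_nl[of G i]
    by (simp add: cf_def ea_def eb_def markv_def nV_def)
qed

lemma sum_fiber:
  fixes c :: "'x \<Rightarrow> rat"
  assumes "finite V"
  shows "(\<Sum>v\<in>V. c v * g (F v)) = (\<Sum>j\<in>F ` V. (\<Sum>v\<in>{v\<in>V. F v = j}. c v) * g j)"
proof -
  have "(\<Sum>v\<in>V. c v * g (F v)) = (\<Sum>j\<in>F ` V. \<Sum>v\<in>{v\<in>V. F v = j}. c v * g (F v))"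
    by (rule sum.image_gen[OF assms])
  also have "\<dots> = (\<Sum>j\<in>F ` V. (\<Sum>v\<in>{v\<in>V. F v = j}. c v) * g j)"
  proof (rule sum.cong[OF refl])
    fix j
    have "(\<Sum>v\<in>{v\<in>V. F v = j}. c v * g (F v)) = (\<Sum>v\<in>{v\<in>V. F v = j}. c v * g j)"
      by (rule sum.cong) auto
    then show "(\<Sum>v\<in>{v\<in>V. F v = j}. c v * g (F v)) = (\<Sum>v\<in>{v\<in>V. F v = j}. c v) * g j"
      by (simp add: sum_distrib_right)
  qed
  finally show ?thesis .
qed

lemma key_tgen:
  assumes bG: "bnds G" and iG: "i < length (edgs G)"
  shows "(\<Sum>v<nV G. of_int (chi G v) * delta (markv (contract G i) (cf G i v)) y) = tgen (contract G i) y"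
proof (cases "ea G i = eb G i")
  case True
  then show ?thesis
    by (simp add: tgen_def cf_def lp_nV[OF bG iG True] chi_lp[OF bG iG True])
next
  case ne: False
  let ?F = "cmap (ea G i) (eb G i)"
  have img: "?F ` {..<nV G} = {..<nV G - 1}"
    using cmap_image[OF ea_lt[OF bG iG] eb_lt[OF bG iG] ne] .
  have "(\<Sum>v<nV G. of_int (chi G v) * delta (markv (contract G i) (cf G i v)) y)
      = (\<Sum>v<nV G. of_int (chi G v) * delta (markv (contract G i) (?F v)) y)"
    using ne by (simp add: cf_def)
  also have "\<dots> = (\<Sum>j\<in>?F ` {..<nV G}. (\<Sum>v\<in>{v\<in>{..<nV G}. ?F v = j}. of_int (chi G v)) * delta (markv (contract G i) j) y)"
    by (rule sum_fiber) simp
  also have "\<dots> = (\<Sum>j<nV G - 1. of_int (chi (contract G i) j) * delta (markv (contract G i) j) y)"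
  proof (rule sum.cong)
    show "?F ` {..<nV G} = {..<nV G - 1}" by (rule img)
  next
    fix j assume j: "j \<in> {..<nV G - 1}"
    have "{v\<in>{..<nV G}. ?F v = j} = {v. v < nV G \<and> ?F v = j}" by auto
    then have "(\<Sum>v\<in>{v\<in>{..<nV G}. ?F v = j}. (of_int (chi G v)::rat)) = of_int (chi (contract G i) j)"
      using chi_nl[OF bG iG ne, of j] j by simp
    then show "(\<Sum>v\<in>{v\<in>{..<nV G}. ?F v = j}. of_int (chi G v)) * delta (markv (contract G i) j) y
         = of_int (chi (contract G i) j) * delta (markv (contract G i) j) y" by simp
  qed
  also have "\<dots> = tgen (contract G i) y"
    by (simp add: tgen_def nl_nV[OF bG iG ne])
  finally show ?thesis .
qed

lemma fs_dgen: "fs (dgen G)"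
  unfolding dgen_def by (rule fs_sum) (auto simp: fs_delta)

lemma fs_tgen: "fs (tgen G)"
  unfolding tgen_def by (rule fs_sum) (auto simp: fs_delta)

lemma lin_tgen_dgen: "lin tgen (dgen G) = (\<lambda>y. \<Sum>i<length (edgs G). (-1)^i * tgen (contract G i) y)"
  unfolding dgen_def
  using lin_sum[of "{..<length (edgs G)}" "\<lambda>i. delta (contract G i)" tgen "\<lambda>i. (-1)^i"]
  by (simp add: fs_delta lin_delta)

lemma lin_dgen_tgen: "lin dgen (tgen G) = (\<lambda>y. \<Sum>v<nV G. of_int (chi G v) * dgen (markv G v) y)"
  unfolding tgen_def
  using lin_sum[of "{..<nV G}" "\<lambda>v. delta (markv G v)" dgen "\<lambda>v. of_int (chi G v)"]
  by (simp add: fs_delta lin_delta)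

lemma dgen_tgen_comm:
  assumes bG: "bnds G"
  shows "lin tgen (dgen G) = lin dgen (tgen G)"
proof
  fix y
  have "lin dgen (tgen G) y = (\<Sum>v<nV G. of_int (chi G v) * (\<Sum>i<length (edgs G). (-1)^i * delta (markv (contract G i) (cf G i v)) y))"
    by (simp add: lin_dgen_tgen dgen_def contract_markv)
  also have "\<dots> = (\<Sum>i<length (edgs G). (-1)^i * (\<Sum>v<nV G. of_int (chi G v) * delta (markv (contract G i) (cf G i v)) y))"
    by (simp add: sum_distrib_left sum.swap[of _ "{..<nV G}"] algebra_simps)
  also have "\<dots> = (\<Sum>i<length (edgs G). (-1)^i * tgen (contract G i) y)"
    by (rule sum.cong) (auto simp: key_tgen[OF bG])
  finally show "lin tgen (dgen G) y = lin dgen (tgen G) y" by (simp add: lin_tgen_dgen)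
qed


lemma length_filter_sum: "length (filter P xs) = (\<Sum>k<length xs. if P (xs ! k) then 1 else 0)"
proof -
  have "length (filter P xs) = card {k. k < length xs \<and> P (xs ! k)}" by (rule length_filter_conv_card)
  also have "\<dots> = card {k\<in>{..<length xs}. P (xs ! k)}" by (simp add: lessThan_def)
  also have "\<dots> = (\<Sum>k\<in>{k\<in>{..<length xs}. P (xs ! k)}. 1)" by simp
  also have "\<dots> = (\<Sum>k<length xs. if P (xs ! k) then 1 else 0)" by (rule sum.inter_filter) simp
  finally show ?thesis .
qed

definition hc :: "nat \<times> nat \<Rightarrow> nat \<Rightarrow> nat" where
  "hc e w = (if fst e = w then 1 else 0) + (if snd e = w then 1 else 0)"

lemma vE_hc: "vE G w = (\<Sum>k<length (edgs G). hc (edgs G ! k) w)"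
  by (simp add: vE_def length_filter_sum hc_def sum.distrib)

lemma vM_sum: "vM G w = (\<Sum>k<length (mks G). if mks G ! k = w then 1 else 0)"
  by (simp add: vM_def length_filter_sum)

lemma hc_ends: "hc e w = (if w \<in> ends e then 3 - card (ends e) else 0)"
  by (cases e) (auto simp: hc_def ends_def)

lemma hc_iso:
  assumes "inj_on p N" "ends e \<subseteq> N" "v \<in> N" "ends e' = p ` ends e"
  shows "hc e' (p v) = hc e v"
proof -
  have "p v \<in> p ` ends e \<longleftrightarrow> v \<in> ends e" using assms by (meson inj_on_image_mem_iff)
  moreover have "card (p ` ends e) = card (ends e)" using assms by (meson card_image inj_on_subset)
  ultimately show ?thesis using assms(4) by (simp add: hc_ends)
qed

lemma val_iso:
  assumes iso: "iso G G' p s" and bG: "bnds G" and v: "v < nV G"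
  shows "val G' (p v) = val G v"
proof -
  let ?n = "nV G" and ?m = "length (edgs G)"
  have pb: "bij_betw p {..<?n} {..<?n}" and sp: "s permutes {..<?m}" and len: "length (edgs G') = ?m"
    and ends: "\<And>k. k < ?m \<Longrightarrow> ends (edgs G' ! s k) = p ` ends (edgs G ! k)"
    and lm: "length (mks G') = length (mks G)" and mk: "\<And>k. k < length (mks G) \<Longrightarrow> mks G' ! k = p (mks G ! k)"
    using iso unfolding iso_def by auto
  have inj: "inj_on p {..<?n}" using pb bij_betw_imp_inj_on by blast
  have "vE G' (p v) = (\<Sum>k<?m. hc (edgs G' ! k) (p v))" by (simp add: vE_hc len)
  also have "\<dots> = (\<Sum>k<?m. hc (edgs G' ! s k) (p v))"
    using sum.reindex_bij_betw[OF permutes_imp_bij[OF sp], of "\<lambda>k. hc (edgs G' ! k) (p v)"] by simp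
  also have "\<dots> = (\<Sum>k<?m. hc (edgs G ! k) v)"
  proof (rule sum.cong[OF refl])
    fix k assume k: "k \<in> {..<?m}"
    have "ends (edgs G ! k) \<subseteq> {..<?n}"
      using bG nth_mem[of k "edgs G"] k unfolding bnds_def ends_def by auto
    then show "hc (edgs G' ! s k) (p v) = hc (edgs G ! k) v"
      using hc_iso[OF inj _ _ ends] k v by auto
  qed
  also have "\<dots> = vE G v" by (simp add: vE_hc)
  finally have e: "vE G' (p v) = vE G v" .
  have "vM G' (p v) = (\<Sum>k<length (mks G). if p (mks G ! k) = p v then 1 else 0)"
    by (simp add: vM_sum lm mk)
  also have "\<dots> = (\<Sum>k<length (mks G). if mks G ! k = v then 1 else 0)"
  proof (rule sum.cong[OF refl])
    fix k assume k: "k \<in> {..<length (mks G)}"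
    then have "mks G ! k < ?n" using bG nth_mem[of k "mks G"] unfolding bnds_def by auto
    then show "(if p (mks G ! k) = p v then 1 else 0) = (if mks G ! k = v then 1 else (0::nat))"
      using inj v by (auto dest: inj_onD)
  qed
  also have "\<dots> = vM G v" by (simp add: vM_sum)
  finally show ?thesis using e by (simp add: val_split)
qed

lemma chi_iso:
  assumes "iso G G' p s" "bnds G" "v < nV G"
  shows "chi G' (p v) = chi G v"
  using val_iso[OF assms] assms(1,3) by (simp add: chi_def iso_def)

lemma adj_markv[simp]: "adj (markv G v) = adj G"
  by (simp add: adj_def markv_def)

lemma vE_markv[simp]: "vE (markv G v) = vE G"
  by (simp add: vE_def markv_def fun_eq_iff)

lemma wt_markv[simp]: "wt (markv G v) = wt G"
  by (simp add: wt_def markv_def fun_eq_iff)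

lemma vM_markv: "vM (markv G v) u = (if u = v then 1 else 0)"
  by (simp add: vM_def markv_def)

lemma valid0_vM: "valid g 0 G \<Longrightarrow> vM G u = 0"
  by (simp add: valid_def vM_def)

lemma valid_markv:
  assumes "valid g 0 G" "v < nV G"
  shows "valid g 1 (markv G v)"
proof -
  have "val (markv G v) u \<ge> val G u" for u
    using valid0_vM[OF assms(1)] by (simp add: val_split vM_markv)
  then show ?thesis using assms
    unfolding valid_def gconnected_def by (auto simp: markv_def[symmetric] intro: less_le_trans) (fastforce simp: markv_def)+
qed


lemma lin2:
  assumes "fs c" "\<And>z. fs (B z)"
  shows "lin A (lin B c) = lin (\<lambda>x. lin A (B x)) c"
proof -
  have "lin B c = (\<lambda>y. \<Sum>x\<in>supp c. c x * B x y)"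
    by (rule ext, rule lin_eq) (use assms in auto)
  then have "lin A (lin B c) = (\<lambda>y. \<Sum>x\<in>supp c. c x * lin A (B x) y)"
    using lin_sum[of "supp c" B A c] assms by simp
  also have "\<dots> = lin (\<lambda>x. lin A (B x)) c"
    by (simp add: lin_def supp_def)
  finally show ?thesis .
qed

lemma lin_cong: "(\<And>x. x \<in> supp c \<Longrightarrow> F x = F' x) \<Longrightarrow> lin F c = lin F' c"
  unfolding lin_def supp_def by (rule ext, rule sum.cong) auto

lemma supp_qspan_delta:
  assumes "c \<in> qspan {delta G | G. P G}"
  shows "supp c \<subseteq> {G. P G}"
  using assms
proof (induction c rule: qspan_induct)
  case zero then show ?case by (simp add: supp_def)
next
  case (step x r c)
  then obtain G where "x = delta G" "P G" by auto
  then show ?case using step(2) by (auto simp: supp_def delta_def)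
qed

lemma fs_chains: "c \<in> chains g n e \<Longrightarrow> fs c"
  unfolding chains_def by (rule qspan_fs) (auto simp: fs_delta)

lemma lin_delta_id: "fs c \<Longrightarrow> lin delta c = c"
proof
  fix y assume f: "fs c"
  have "lin delta c y = (\<Sum>x\<in>supp c \<union> {y}. c x * delta x y)"
    by (rule lin_eq) (use f in auto)
  also have "\<dots> = (\<Sum>x\<in>supp c \<union> {y}. if x = y then c y else 0)"
    by (rule sum.cong) (auto simp: delta_def)
  also have "\<dots> = c y" using f by (simp add: sum.delta')
  finally show "lin delta c y = c y" .
qed

lemma tgen_chains:
  assumes "valid g 0 G" "length (edgs G) = e"
  shows "tgen G \<in> chains g 1 e"
  unfolding tgen_def chains_def
proof (rule qspan_sum)
  fix v assume v: "v \<in> {..<nV G}"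
  have "valid g 1 (markv G v) \<and> length (edgs (markv G v)) = e" using valid_markv[OF assms(1)] v assms(2) by simp
  then show "delta (markv G v) \<in> qspan {delta G |G. valid g 1 G \<and> length (edgs G) = e}"
    by (intro qspan_base CollectI exI[of _ "markv G v"]) simp
qed simp

lemma tgen_posw:
  assumes "valid g 0 G" "length (edgs G) = e" "\<exists>v<nV G. wt G v > 0"
  shows "tgen G \<in> posw g 1 e"
  unfolding tgen_def posw_def
proof (rule qspan_sum)
  fix v assume v: "v \<in> {..<nV G}"
  have "valid g 1 (markv G v) \<and> length (edgs (markv G v)) = e \<and> (\<exists>v<nV (markv G v). wt (markv G v) v > 0)"
    using valid_markv[OF assms(1)] v assms(2,3) by simp
  then show "delta (markv G v) \<in> qspan {delta G |G. valid g 1 G \<and> length (edgs G) = e \<and> (\<exists>v<nV G. wt G v > 0)}"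
    by (intro qspan_base CollectI exI[of _ "markv G v"]) simp
qed simp

lemma iso_markv:
  assumes "iso G G' p s" "v < nV G"
  shows "iso (markv G v) (markv G' (p v)) p s"
  using assms by (simp add: iso_def markv_def nV_def wt_def)

lemma tgen_rels:
  assumes val: "valid g 0 G" and len: "length (edgs G) = e" and iso: "iso G G' p s"
  shows "(\<lambda>y. tgen G y - of_int (sign s) * tgen G' y) \<in> rels g 1 e"
proof -
  let ?n = "nV G"
  have bG: "bnds G" using valid_bnds[OF val] .
  have pb: "bij_betw p {..<?n} {..<?n}" and nn: "nV G' = ?n" using iso unfolding iso_def by auto
  have t2: "tgen G' y = (\<Sum>v<?n. of_int (chi G v) * delta (markv G' (p v)) y)" for y
  proof -
    have "tgen G' y = (\<Sum>u<?n. of_int (chi G' u) * delta (markv G' u) y)" by (simp add: tgen_def nn)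
    also have "\<dots> = (\<Sum>v<?n. of_int (chi G' (p v)) * delta (markv G' (p v)) y)"
      using sum.reindex_bij_betw[OF pb, of "\<lambda>u. of_int (chi G' u) * delta (markv G' u) y"] by simp
    also have "\<dots> = (\<Sum>v<?n. of_int (chi G v) * delta (markv G' (p v)) y)"
      by (rule sum.cong) (auto simp: chi_iso[OF iso bG])
    finally show ?thesis .
  qed
  have "(\<lambda>y. tgen G y - of_int (sign s) * tgen G' y)
      = (\<lambda>y. \<Sum>v<?n. of_int (chi G v) * (delta (markv G v) y - of_int (sign s) * delta (markv G' (p v)) y))"
    by (rule ext, unfold t2) (simp add: tgen_def algebra_simps sum_subtractf sum_distrib_left)
  also have "\<dots> \<in> rels g 1 e"
    unfolding rels_def
  proof (rule qspan_sum)
    fix v assume v: "v \<in> {..<?n}"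
    show "(\<lambda>y. delta (markv G v) y - of_int (sign s) * delta (markv G' (p v)) y)
      \<in> qspan {\<lambda>y. delta G y - of_int (sign s) * delta G' y |G G' p s. valid g 1 G \<and> length (edgs G) = e \<and> iso G G' p s}"
    proof (rule qspan_base, rule CollectI, intro exI conjI)
      show "valid g 1 (markv G v)" using valid_markv[OF val] v by simp
      show "length (edgs (markv G v)) = e" using len by simp
      show "iso (markv G v) (markv G' (p v)) p s" using iso_markv[OF iso] v by simp
    qed (rule refl)
  qed simp
  finally show ?thesis .
qed

lemma claim12:
  shows "lin tgen ` chains g 0 e \<subseteq> chains g 1 e"
    and "lin tgen ` rels g 0 e \<subseteq> rels g 1 e"
    and "lin tgen ` posw g 0 e \<subseteq> posw g 1 e"
proof -
  show "lin tgen ` chains g 0 e \<subseteq> chains g 1 e"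
  proof
    fix c assume "c \<in> lin tgen ` chains g 0 e"
    then obtain c0 where c0: "c0 \<in> chains g 0 e" "c = lin tgen c0" by auto
    show "c \<in> chains g 1 e" unfolding c0(2)
      using c0(1) unfolding chains_def
    proof (rule lin_qspan)
      fix x assume "x \<in> {delta G |G. valid g 0 G \<and> length (edgs G) = e}"
      then obtain G where x: "x = delta G" "valid g 0 G" "length (edgs G) = e" by blast
      show "fs x" unfolding x(1) by (rule fs_delta)
      show "lin tgen x \<in> qspan {delta G |G. valid g 1 G \<and> length (edgs G) = e}"
        unfolding x(1) lin_delta using tgen_chains[OF x(2,3), unfolded chains_def] .
    qed
  qed
  show "lin tgen ` posw g 0 e \<subseteq> posw g 1 e"
  proof
    fix c assume "c \<in> lin tgen ` posw g 0 e"
    then obtain c0 where c0: "c0 \<in> posw g 0 e" "c = lin tgen c0" by auto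
    show "c \<in> posw g 1 e" unfolding c0(2)
      using c0(1) unfolding posw_def
    proof (rule lin_qspan)
      fix x assume "x \<in> {delta G |G. valid g 0 G \<and> length (edgs G) = e \<and> (\<exists>v<nV G. wt G v > 0)}"
      then obtain G where x: "x = delta G" "valid g 0 G" "length (edgs G) = e" "\<exists>v<nV G. wt G v > 0" by blast
      show "fs x" unfolding x(1) by (rule fs_delta)
      show "lin tgen x \<in> qspan {delta G |G. valid g 1 G \<and> length (edgs G) = e \<and> (\<exists>v<nV G. wt G v > 0)}"
        unfolding x(1) lin_delta using tgen_posw[OF x(2,3,4), unfolded posw_def] .
    qed
  qed
  show "lin tgen ` rels g 0 e \<subseteq> rels g 1 e"
  proof
    fix c assume "c \<in> lin tgen ` rels g 0 e"
    then obtain c0 where c0: "c0 \<in> rels g 0 e" "c = lin tgen c0" by auto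
    show "c \<in> rels g 1 e" unfolding c0(2)
      using c0(1) unfolding rels_def
    proof (rule lin_qspan)
      fix x assume "x \<in> {\<lambda>y. delta G y - of_int (sign s) * delta G' y |G G' p s. valid g 0 G \<and> length (edgs G) = e \<and> iso G G' p s}"
      then obtain G G' p s where x: "x = (\<lambda>y. delta G y - of_int (sign s) * delta G' y)"
        "valid g 0 G" "length (edgs G) = e" "iso G G' p s" by blast
      have "lin tgen x = (\<lambda>y. tgen G y - of_int (sign s) * tgen G' y)"
        unfolding x(1) by (simp add: lin_diff fs_delta fs_scale lin_scale lin_delta)
      then show "lin tgen x \<in> qspan {\<lambda>y. delta G y - of_int (sign s) * delta G' y |G G' p s. valid g 1 G \<and> length (edgs G) = e \<and> iso G G' p s}"
        using tgen_rels[OF x(2-4), unfolded rels_def] by simp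
      show "fs x" unfolding x(1) using fs_add[OF fs_delta fs_scale[OF fs_delta, of "- of_int (sign s)"]] by simp
    qed
  qed
qed

lemma claim3:
  assumes "c \<in> chains g 0 (Suc e)"
  shows "(\<lambda>y. lin tgen (lin dgen c) y - lin dgen (lin tgen c) y) \<in> rels g 1 e"
proof -
  have f: "fs c" using fs_chains[OF assms] .
  have s: "supp c \<subseteq> {G. valid g 0 G \<and> length (edgs G) = Suc e}"
    using supp_qspan_delta[of c "\<lambda>G. valid g 0 G \<and> length (edgs G) = Suc e"] assms unfolding chains_def by simp
  have "lin tgen (lin dgen c) = lin (\<lambda>x. lin tgen (dgen x)) c" using lin2[OF f] fs_dgen by blast
  also have "\<dots> = lin (\<lambda>x. lin dgen (tgen x)) c"
    by (rule lin_cong) (use s dgen_tgen_comm valid_bnds in blast)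
  also have "\<dots> = lin dgen (lin tgen c)" using lin2[OF f] fs_tgen by metis
  finally show ?thesis by (simp add: qspan_zero rels_def)
qed


definition forget :: "lgraph \<Rightarrow> lgraph" where "forget H = (edgs H, wts H, [])"

definition sgen :: "lgraph \<Rightarrow> lgraph \<Rightarrow> rat" where
  "sgen H = (if 3 < 2 * wt H (hd (mks H)) + val H (hd (mks H)) then delta (forget H) else (\<lambda>_. 0))"

lemma fs_sgen: "fs (sgen H)"
  by (simp add: sgen_def fs_delta fs_zero)

lemma forget_simps[simp]: "edgs (forget H) = edgs H" "wts (forget H) = wts H" "mks (forget H) = []"
  by (simp_all add: forget_def)

lemma forget_simps2[simp]: "nV (forget H) = nV H" "wt (forget H) = wt H" "adj (forget H) = adj H" "vE (forget H) = vE H"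
  unfolding nV_def wt_def adj_def vE_def by simp_all

lemma val_forget: "val (forget H) v = vE H v"
  by (simp add: val_split vM_def)

lemma valid1_mks: "valid g 1 H \<Longrightarrow> mks H = [hd (mks H)]"
proof -
  assume "valid g 1 H"
  then have "length (mks H) = 1" unfolding valid_def by blast
  then show ?thesis by (cases "mks H") auto
qed

lemma valid1_vM: "valid g 1 H \<Longrightarrow> vM H v = (if v = hd (mks H) then 1 else 0)"
proof -
  assume "valid g 1 H"
  then obtain m where m: "mks H = [m]" using valid1_mks by metis
  then show ?thesis by (simp add: vM_def)
qed

lemma valid_forget:
  assumes v: "valid g 1 H" and st: "3 < 2 * wt H (hd (mks H)) + val H (hd (mks H))"
  shows "valid g 0 (forget H)"
proof -
  have "2 < 2 * wt H u + vE H u" if "u < nV H" for u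
  proof (cases "u = hd (mks H)")
    case True then show ?thesis using st valid1_vM[OF v, of u] by (simp add: val_split)
  next
    case False
    have "2 < 2 * wt H u + val H u" using v that unfolding valid_def by blast
    then show ?thesis using False valid1_vM[OF v, of u] by (simp add: val_split)
  qed
  then show ?thesis using v unfolding valid_def gconnected_def by (simp add: val_forget)
qed

lemma sgen_chains:
  assumes "valid g 1 H" "length (edgs H) = e"
  shows "sgen H \<in> chains g 0 e"
proof (cases "3 < 2 * wt H (hd (mks H)) + val H (hd (mks H))")
  case True
  have "valid g 0 (forget H) \<and> length (edgs (forget H)) = e" using valid_forget[OF assms(1) True] assms(2) by simp
  then have "delta (forget H) \<in> chains g 0 e" unfolding chains_def
    by (intro qspan_base CollectI exI[of _ "forget H"]) simp
  then show ?thesis using True by (simp add: sgen_def)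
qed (simp add: sgen_def chains_def qspan_zero)

lemma sgen_posw:
  assumes "valid g 1 H" "length (edgs H) = e" "\<exists>v<nV H. wt H v > 0"
  shows "sgen H \<in> posw g 0 e"
proof (cases "3 < 2 * wt H (hd (mks H)) + val H (hd (mks H))")
  case True
  have "valid g 0 (forget H) \<and> length (edgs (forget H)) = e \<and> (\<exists>v<nV (forget H). wt (forget H) v > 0)"
    using valid_forget[OF assms(1) True] assms(2,3) by simp
  then have "delta (forget H) \<in> posw g 0 e" unfolding posw_def
    by (intro qspan_base CollectI exI[of _ "forget H"]) simp
  then show ?thesis using True by (simp add: sgen_def)
qed (simp add: sgen_def posw_def qspan_zero)

lemma iso_forget: "iso H H' p s \<Longrightarrow> iso (forget H) (forget H') p s"
  by (simp add: iso_def)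

lemma sgen_rels:
  assumes v: "valid g 1 H" and len: "length (edgs H) = e" and iso: "iso H H' p s"
  shows "(\<lambda>y. sgen H y - of_int (sign s) * sgen H' y) \<in> rels g 0 e"
proof -
  let ?m = "hd (mks H)"
  have m: "mks H = [?m]" using valid1_mks[OF v] .
  have "?m \<in> set (mks H)" using m by (metis list.set_intros(1))
  then have mlt: "?m < nV H" using v unfolding valid_def by blast
  have i1: "length (mks H') = length (mks H)" and i2: "\<forall>i < length (mks H). mks H' ! i = p (mks H ! i)"
    using iso unfolding iso_def by blast+
  have l0: "length (mks H) = 1" using arg_cong[OF m, of length] by simp
  have l1: "length (mks H') = 1" using i1 l0 by simp
  have "mks H' ! 0 = p (mks H ! 0)" using i2 l0 by simp
  moreover have "mks H ! 0 = ?m" using arg_cong[OF m, of "\<lambda>l. l ! 0"] by simp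
  ultimately have "mks H' ! 0 = p ?m" by simp
  then have m': "hd (mks H') = p ?m" using l1 by (cases "mks H'") auto
  have w: "wt H' (p ?m) = wt H ?m" using iso mlt by (simp add: iso_def)
  have vl: "val H' (p ?m) = val H ?m" using val_iso[OF iso valid_bnds[OF v] mlt] .
  show ?thesis
  proof (cases "3 < 2 * wt H ?m + val H ?m")
    case True
    then have "(\<lambda>y. sgen H y - of_int (sign s) * sgen H' y) = (\<lambda>y. delta (forget H) y - of_int (sign s) * delta (forget H') y)"
      using m' w vl by (simp add: sgen_def)
    also have "\<dots> \<in> rels g 0 e" unfolding rels_def
    proof (rule qspan_base, rule CollectI, intro exI conjI)
      show "valid g 0 (forget H)" using valid_forget[OF v True] .
      show "length (edgs (forget H)) = e" using len by simp
      show "iso (forget H) (forget H') p s" using iso_forget[OF iso] .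
    qed (rule refl)
    finally show ?thesis .
  next
    case False
    then show ?thesis using m' w vl by (simp add: sgen_def rels_def qspan_zero)
  qed
qed

lemma sum_vE:
  assumes "bnds G"
  shows "(\<Sum>v<nV G. vE G v) = 2 * length (edgs G)"
proof -
  have a: "(\<Sum>v<nV G. length (filter (\<lambda>e. fst e = v) (edgs G))) = length (edgs G)"
    using length_filter_fiber[of "edgs G" fst "nV G" "\<lambda>_. 0::nat" 0] assms
    by (simp add: bnds_def lessThan_def)
  have b: "(\<Sum>v<nV G. length (filter (\<lambda>e. snd e = v) (edgs G))) = length (edgs G)"
    using length_filter_fiber[of "edgs G" snd "nV G" "\<lambda>_. 0::nat" 0] assms
    by (simp add: bnds_def lessThan_def)
  show ?thesis using a b by (simp add: vE_def sum.distrib)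
qed

lemma sum_chi:
  assumes v: "valid g 0 G"
  shows "(\<Sum>v<nV G. chi G v) = 2 * int g - 2"
proof -
  have "(\<Sum>v<nV G. chi G v) = (\<Sum>v<nV G. 2 * int (wt G v) + int (vE G v) - 2)"
    by (rule sum.cong) (auto simp: chi_alt valid0_vM[OF v])
  also have "\<dots> = 2 * int (\<Sum>v<nV G. wt G v) + int (\<Sum>v<nV G. vE G v) - 2 * int (nV G)"
    by (simp add: sum.distrib sum_subtractf sum_distrib_left)
  also have "(\<Sum>v<nV G. wt G v) = sum_list (wts G)"
    by (simp add: wt_def nV_def sum_list_sum_nth atLeast0LessThan)
  also have "(\<Sum>v<nV G. vE G v) = 2 * length (edgs G)" using sum_vE[OF valid_bnds[OF v]] .
  finally show ?thesis using v unfolding valid_def by linarith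
qed

lemma sgen_markv:
  assumes v: "valid g 0 G" and u: "u < nV G"
  shows "sgen (markv G u) = delta G"
proof -
  have "2 < 2 * wt G u + val G u" using v u by (simp add: valid_def)
  moreover have "val (markv G u) u = val G u + 1" using valid0_vM[OF v] by (simp add: val_split vM_markv)
  moreover have "forget (markv G u) = G" using v by (cases G) (simp add: forget_def markv_def valid_def)
  ultimately show ?thesis by (simp add: sgen_def markv_def[symmetric]) (simp add: markv_def)
qed

lemma sgen_tgen:
  assumes v: "valid g 0 G"
  shows "lin sgen (tgen G) = (\<lambda>y. (2 * of_nat g - 2) * delta G y)"
proof -
  have "lin sgen (tgen G) = (\<lambda>y. \<Sum>v<nV G. of_int (chi G v) * sgen (markv G v) y)"
    unfolding tgen_def
    using lin_sum[of "{..<nV G}" "\<lambda>v. delta (markv G v)" sgen "\<lambda>v. of_int (chi G v)"]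
    by (simp add: fs_delta lin_delta)
  also have "\<dots> = (\<lambda>y. (\<Sum>v<nV G. of_int (chi G v)) * delta G y)"
    by (rule ext) (simp add: sgen_markv[OF v] sum_distrib_right)
  also have "(\<Sum>v<nV G. (of_int (chi G v)::rat)) = of_int (\<Sum>v<nV G. chi G v)" by simp
  also have "\<dots> = 2 * of_nat g - 2" using sum_chi[OF v] by simp
  finally show ?thesis .
qed


definition cyc :: "nat \<Rightarrow> nat \<Rightarrow> nat \<Rightarrow> nat" where
  "cyc i j k = (if i \<le> k \<and> k < j then Suc k else if k = j then i else k)"

lemma cyc_step: "cyc i (i + Suc d) = cyc i (i + d) \<circ> Transposition.transpose (i + d) (Suc (i + d))"
  by (auto simp: fun_eq_iff cyc_def Transposition.transpose_def)

lemma cyc_base: "cyc i i = id"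
  by (auto simp: fun_eq_iff cyc_def)

lemma cyc_sign_aux: "permutation (cyc i (i + d)) \<and> sign (cyc i (i + d)) = (-1) ^ d"
proof (induction d)
  case 0 then show ?case by (simp add: cyc_base permutation_id)
next
  case (Suc d)
  let ?T = "Transposition.transpose (i + d) (Suc (i + d))"
  have p: "permutation ?T" by (rule permutation_swap_id)
  have ts: "sign ?T = -1" by (simp add: sign_swap_id)
  have pc: "permutation (cyc i (i + d) \<circ> ?T)" using Suc p by (intro permutation_compose) auto
  have sc: "sign (cyc i (i + d) \<circ> ?T) = sign (cyc i (i + d)) * sign ?T"
    by (rule sign_compose) (use Suc p in auto)
  have "sign (cyc i (i + d) \<circ> ?T) = (-1)^Suc d" using sc ts Suc by simp
  then show ?case unfolding cyc_step using pc by blast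
qed

lemma cyc_sign: "i \<le> j \<Longrightarrow> sign (cyc i j) = (-1) ^ (j - i)"
  using cyc_sign_aux[of i "j - i"] by simp

lemma cyc_permutes:
  assumes "i \<le> j" "j < e"
  shows "cyc i j permutes {..<e}"
proof -
  have "permutation (cyc i j)" using cyc_sign_aux[of i "j - i"] assms by simp
  then have b: "bij (cyc i j)" by (rule permutation_bijective)
  show ?thesis unfolding permutes_def
  proof (intro conjI allI impI)
    fix x assume "x \<notin> {..<e}" then show "cyc i j x = x" using assms by (auto simp: cyc_def)
  next
    fix y show "\<exists>!x. cyc i j x = y" using b by (metis bij_pointE)
  qed
qed

lemma nth_es:
  assumes "i < length E" "r < length E - 1"
  shows "(take i E @ drop (Suc i) E) ! r = E ! (if r < i then r else Suc r)"
  using assms by (auto simp: nth_append min_def)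

lemma es_mem:
  assumes "i < length E" "k < length E" "k \<noteq> i"
  shows "E ! k \<in> set (take i E @ drop (Suc i) E)"
proof -
  let ?r = "if k < i then k else k - 1"
  have "?r < length E - 1" using assms by auto
  moreover have "(if ?r < i then ?r else Suc ?r) = k" using assms by auto
  ultimately show ?thesis using nth_es[OF assms(1), of ?r] nth_mem[of ?r "take i E @ drop (Suc i) E"] assms
    by (auto simp: min_def)
qed

lemma ends_contract_nl:
  assumes bG: "bnds G" and iG: "i < length (edgs G)" and ne: "ea G i \<noteq> eb G i" and r: "r < length (edgs G) - 1"
  shows "ends (edgs (contract G i) ! r) = cmap (ea G i) (eb G i) ` ends (edgs G ! (if r < i then r else Suc r))"
proof -
  have lr: "r < length (take i (edgs G) @ drop (Suc i) (edgs G))" using r iG by (simp add: min_def)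
  have "edgs (contract G i) ! r = (\<lambda>(x, y). (cmap (ea G i) (eb G i) x, cmap (ea G i) (eb G i) y)) ((take i (edgs G) @ drop (Suc i) (edgs G)) ! r)"
    using ne nth_map[OF lr] by (simp add: contract_nl ea_def eb_def del: map_append)
  then show ?thesis using nth_es[OF iG r] by (simp add: ends_def case_prod_beta)
qed

lemma cmap_fiber:
  assumes "a < n" "b < n" "a \<noteq> b" "x < n"
  shows "{v. v < n \<and> cmap a b v = cmap a b x} = (if x \<in> {a, b} then {a, b} else {x})"
  using assms cmap_eq_iff[OF assms(3)] by auto

definition q :: "lgraph \<Rightarrow> nat \<Rightarrow> nat" where "q G v = 2 * wt G v + val G v"

lemma q_nl:
  assumes bG: "bnds G" and iG: "i < length (edgs G)" and ne: "ea G i \<noteq> eb G i" and j: "j < nV G - 1"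
  shows "q (contract G i) j + (if cmap (ea G i) (eb G i) (ea G i) = j then 2 else 0)
       = (\<Sum>v\<in>{v. v < nV G \<and> cmap (ea G i) (eb G i) v = j}. q G v)"
  using nl_wt[OF bG iG ne j] nl_vE[OF bG iG ne, of j] nl_vM[OF bG iG ne, of j]
  by (simp add: q_def val_split sum.distrib sum_distrib_left)

lemma q_lp:
  assumes bG: "bnds G" and iG: "i < length (edgs G)" and eq: "ea G i = eb G i" and j: "j < nV G"
  shows "q (contract G i) j = q G j"
  using lp_wt[OF bG iG eq j] lp_vE[OF bG iG eq, of j] lp_vM[OF bG iG eq, of j]
  by (auto simp: q_def val_split split: if_splits)

lemma mks_contract: "mks (contract G i) = map (cf G i) (mks G)"
proof (cases "ea G i = eb G i")
  case True
  then have "cf G i = id" by (simp add: cf_def fun_eq_iff)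
  then show ?thesis using True by (simp add: contract_loop ea_def eb_def)
next
  case False
  then have "cf G i = cmap (ea G i) (eb G i)" by (simp add: cf_def fun_eq_iff)
  then show ?thesis using False by (simp add: contract_nl ea_def eb_def)
qed

lemma q_nl_point:
  assumes bG: "bnds G" and iG: "i < length (edgs G)" and ne: "ea G i \<noteq> eb G i" and x: "x < nV G"
  shows "q (contract G i) (cmap (ea G i) (eb G i) x) + (if x \<in> {ea G i, eb G i} then 2 else 0)
       = (if x \<in> {ea G i, eb G i} then q G (ea G i) + q G (eb G i) else q G x)"
proof -
  let ?F = "cmap (ea G i) (eb G i)"
  have a: "ea G i < nV G" "eb G i < nV G" using ea_lt[OF bG iG] eb_lt[OF bG iG] .
  have j: "?F x < nV G - 1" using cmap_lt[OF a ne x] .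
  have fib: "{v. v < nV G \<and> ?F v = ?F x} = (if x \<in> {ea G i, eb G i} then {ea G i, eb G i} else {x})"
    using cmap_fiber[OF a ne x] .
  have "(?F (ea G i) = ?F x) \<longleftrightarrow> x \<in> {ea G i, eb G i}" using cmap_eq_iff[OF ne] by auto
  then show ?thesis using q_nl[OF bG iG ne j] fib ne by (auto split: if_splits)
qed

lemma adj_sym: "(x, y) \<in> adj G \<Longrightarrow> (y, x) \<in> adj G"
  by (auto simp: adj_def)

lemma adj_rtrancl_sym: "(x, y) \<in> (adj G)\<^sup>* \<Longrightarrow> (y, x) \<in> (adj G)\<^sup>*"
proof (induction rule: rtrancl_induct)
  case base then show ?case by simp
next
  case (step y z)
  then show ?case using adj_sym by (meson converse_rtrancl_into_rtrancl)
qed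

lemma adj_contract:
  assumes iG: "i < length (edgs G)" and ne: "ea G i \<noteq> eb G i" and xy: "(x, y) \<in> adj G"
  shows "cmap (ea G i) (eb G i) x = cmap (ea G i) (eb G i) y \<or> (cmap (ea G i) (eb G i) x, cmap (ea G i) (eb G i) y) \<in> adj (contract G i)"
proof -
  let ?F = "cmap (ea G i) (eb G i)"
  let ?es = "take i (edgs G) @ drop (Suc i) (edgs G)"
  have edges: "set (edgs (contract G i)) = (\<lambda>(x, y). (?F x, ?F y)) ` set ?es"
    using ne by (simp add: contract_nl ea_def eb_def image_Un)
  have main: "?F u = ?F w \<or> (?F u, ?F w) \<in> set (edgs (contract G i))" if uw: "(u, w) \<in> set (edgs G)" for u w
  proof -
    obtain k where k: "k < length (edgs G)" "edgs G ! k = (u, w)" using uw by (metis in_set_conv_nth)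
    show ?thesis
    proof (cases "k = i")
      case True
      then have "u = ea G i" "w = eb G i" using k by (auto simp: ea_def eb_def)
      then show ?thesis using cmap_ab by metis
    next
      case False
      then have "(u, w) \<in> set ?es" using es_mem[OF iG k(1) False] k by simp
      then show ?thesis unfolding edges by force
    qed
  qed
  from xy have "(x, y) \<in> set (edgs G) \<or> (y, x) \<in> set (edgs G)" by (simp add: adj_def)
  then show ?thesis
  proof
    assume "(x, y) \<in> set (edgs G)"
    then show ?thesis using main[of x y] unfolding adj_def by auto
  next
    assume "(y, x) \<in> set (edgs G)"
    then show ?thesis using main[of y x] unfolding adj_def by auto
  qed
qed

lemma adj_contract_rtrancl:
  assumes iG: "i < length (edgs G)" and ne: "ea G i \<noteq> eb G i" and xy: "(x, y) \<in> (adj G)\<^sup>*"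
  shows "(cmap (ea G i) (eb G i) x, cmap (ea G i) (eb G i) y) \<in> (adj (contract G i))\<^sup>*"
  using xy
proof (induction rule: rtrancl_induct)
  case base then show ?case by simp
next
  case (step y z)
  then show ?case using adj_contract[OF iG ne step(2)] by (metis rtrancl.rtrancl_into_rtrancl)
qed

lemma valid_contract_nl:
  assumes v: "valid g 1 H" and iG: "i < length (edgs H)" and ne: "ea H i \<noteq> eb H i"
  shows "valid g 1 (contract H i)"
proof -
  let ?F = "cmap (ea H i) (eb H i)" and ?n = "nV H"
  have bH: "bnds H" using valid_bnds[OF v] .
  have a: "ea H i < ?n" "eb H i < ?n" using ea_lt[OF bH iG] eb_lt[OF bH iG] .
  have nv: "nV (contract H i) = ?n - 1" using nl_nV[OF bH iG ne] .
  have n2: "?n \<ge> 2" using a ne by auto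
  have edges: "set (edgs (contract H i)) = (\<lambda>(x, y). (?F x, ?F y)) ` set (take i (edgs H) @ drop (Suc i) (edgs H))"
    using ne by (simp add: contract_nl ea_def eb_def image_Un)
  have eb: "\<forall>e\<in>set (edgs (contract H i)). fst e < nV (contract H i) \<and> snd e < nV (contract H i)"
  proof
    fix e assume "e \<in> set (edgs (contract H i))"
    then obtain x y where xy: "e = (?F x, ?F y)" "(x, y) \<in> set (take i (edgs H) @ drop (Suc i) (edgs H))"
      unfolding edges by auto
    then have "(x, y) \<in> set (edgs H)" by (auto dest: in_set_takeD in_set_dropD)
    then have "x < ?n" "y < ?n" using bH by (auto simp: bnds_def)
    then show "fst e < nV (contract H i) \<and> snd e < nV (contract H i)" using xy cmap_lt[OF a ne] nv by auto
  qed
  have mk: "mks (contract H i) = map ?F (mks H)" using ne by (simp add: mks_contract cf_def)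
  have mb: "\<forall>u\<in>set (mks (contract H i)). u < nV (contract H i)"
    using mk bH cmap_lt[OF a ne] nv by (auto simp: bnds_def)
  have ml: "length (mks (contract H i)) = 1" using mk v by (simp add: valid_def)
  have conn: "gconnected (contract H i)"
    unfolding gconnected_def
  proof (intro allI impI)
    fix j assume j: "j < nV (contract H i)"
    obtain x where x: "x < ?n" "?F x = j" using cmap_surj[OF a ne, of j] j nv by auto
    obtain w where w: "w < ?n" "?F w = 0" using cmap_surj[OF a ne, of 0] n2 by auto
    have c1: "(0, x) \<in> (adj H)\<^sup>*" "(0, w) \<in> (adj H)\<^sup>*" using v x w by (auto simp: valid_def gconnected_def)
    have "(?F 0, ?F x) \<in> (adj (contract H i))\<^sup>*" using adj_contract_rtrancl[OF iG ne c1(1)] .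
    moreover have "(?F 0, ?F w) \<in> (adj (contract H i))\<^sup>*" using adj_contract_rtrancl[OF iG ne c1(2)] .
    then have "(0, ?F 0) \<in> (adj (contract H i))\<^sup>*" using w adj_rtrancl_sym by metis
    ultimately show "(0, j) \<in> (adj (contract H i))\<^sup>*" using x by (meson rtrancl_trans)
  qed
  have sw: "sum_list (wts (contract H i)) = sum_list (wts H)"
  proof -
    have "sum_list (wts (contract H i)) = (\<Sum>j<?n - 1. wt (contract H i) j)"
      using nv by (simp add: wt_def nV_def sum_list_sum_nth atLeast0LessThan)
    also have "\<dots> = (\<Sum>j\<in>?F ` {..<?n}. \<Sum>v\<in>{v\<in>{..<?n}. ?F v = j}. wt H v)"
      using cmap_image[OF a ne] nl_wt[OF bH iG ne] by (intro sum.cong) auto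
    also have "\<dots> = (\<Sum>v<?n. wt H v)" by (rule sum.image_gen[symmetric]) simp
    also have "\<dots> = sum_list (wts H)" by (simp add: wt_def nV_def sum_list_sum_nth atLeast0LessThan)
    finally show ?thesis .
  qed
  have gen: "length (edgs (contract H i)) + 1 + sum_list (wts (contract H i)) = g + nV (contract H i)"
  proof -
    have "length (edgs H) + 1 + sum_list (wts H) = g + nV H" using v unfolding valid_def by blast
    then show ?thesis using iG sw nv len_contract[OF bH iG] n2 by arith
  qed
  have st: "\<forall>j < nV (contract H i). 2 * wt (contract H i) j + val (contract H i) j > 2"
  proof (intro allI impI)
    fix j assume j: "j < nV (contract H i)"
    obtain x where x: "x < ?n" "?F x = j" using cmap_surj[OF a ne, of j] j nv by auto
    have qq: "\<forall>v<?n. q H v > 2" using v by (simp add: valid_def q_def)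
    have "q (contract H i) j > 2" using q_nl_point[OF bH iG ne x(1)] x qq[rule_format, OF a(1)] qq[rule_format, OF a(2)] qq[rule_format, OF x(1)]
      by (auto split: if_splits)
    then show "2 * wt (contract H i) j + val (contract H i) j > 2" by (simp add: q_def)
  qed
  show ?thesis unfolding valid_def using nv n2 eb ml mb conn gen st by auto
qed


lemma cmap_bij:
  assumes a: "a < n" "b < n" "a \<noteq> b" and m: "m \<in> {a, b}"
  shows "bij_betw (cmap a b) ({..<n} - {m}) {..<n - 1}"
proof (rule bij_betw_imageI)
  show "inj_on (cmap a b) ({..<n} - {m})"
    using m cmap_eq_iff[OF a(3)] by (auto simp: inj_on_def)
  show "cmap a b ` ({..<n} - {m}) = {..<n - 1}"
  proof
    show "cmap a b ` ({..<n} - {m}) \<subseteq> {..<n - 1}" using cmap_lt[OF a] by auto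
  next
    show "{..<n - 1} \<subseteq> cmap a b ` ({..<n} - {m})"
    proof
      fix j assume "j \<in> {..<n - 1}"
      then obtain x where x: "x < n" "cmap a b x = j" using cmap_surj[OF a, of j] by auto
      show "j \<in> cmap a b ` ({..<n} - {m})"
      proof (cases "x = m")
        case False then show ?thesis using x by auto
      next
        case True
        let ?u = "if m = a then b else a"
        have "?u < n" "?u \<noteq> m" "cmap a b ?u = cmap a b m" using a m cmap_ab[of a b] by auto
        then show ?thesis using x True by (auto intro!: image_eqI[of _ _ ?u])
      qed
    qed
  qed
qed

lemma wt_contract_m:
  assumes bH: "bnds H" and iH: "i < length (edgs H)" and ne: "ea H i \<noteq> eb H i"
    and m: "m \<in> {ea H i, eb H i}" and w0: "wt H m = 0" and x: "x < nV H" "x \<noteq> m"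
  shows "wt (contract H i) (cmap (ea H i) (eb H i) x) = wt H x"
proof -
  have a: "ea H i < nV H" "eb H i < nV H" using ea_lt[OF bH iH] eb_lt[OF bH iH] .
  have j: "cmap (ea H i) (eb H i) x < nV H - 1" using cmap_lt[OF a ne x(1)] .
  have fib: "{v. v < nV H \<and> cmap (ea H i) (eb H i) v = cmap (ea H i) (eb H i) x} = (if x \<in> {ea H i, eb H i} then {x, m} else {x})"
    using cmap_fiber[OF a ne x(1)] m x(2) by auto
  show ?thesis using nl_wt[OF bH iH ne j] fib x(2) w0 by simp
qed

lemma ends_sub:
  assumes "bnds H" "k < length (edgs H)"
  shows "ends (edgs H ! k) \<subseteq> {..<nV H}"
  using assms nth_mem[of k "edgs H"] unfolding bnds_def ends_def by auto

lemma contract_forget: "contract (forget H) i = forget (contract H i)"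
proof (cases "fst (edgs H ! i) = snd (edgs H ! i)")
  case True
  then show ?thesis using contract_loop[of "forget H" i] contract_loop[of H i]
    by (simp add: forget_def)
next
  case False
  then show ?thesis using contract_nl[of "forget H" i] contract_nl[of H i]
    by (simp add: forget_def nV_def)
qed

context
  fixes H :: lgraph and m i1 i2 :: nat
  assumes bH: "bnds H" and i12: "i1 < i2" and i2l: "i2 < length (edgs H)"
    and ne1: "ea H i1 \<noteq> eb H i1" and ne2: "ea H i2 \<noteq> eb H i2"
    and m1: "m \<in> {ea H i1, eb H i1}" and m2: "m \<in> {ea H i2, eb H i2}"
    and oth: "\<forall>k<length (edgs H). k \<noteq> i1 \<longrightarrow> k \<noteq> i2 \<longrightarrow> m \<notin> ends (edgs H ! k)"
    and w0: "wt H m = 0" and mn: "m < nV H"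
begin

abbreviation "F1 \<equiv> cmap (ea H i1) (eb H i1)"
abbreviation "F2 \<equiv> cmap (ea H i2) (eb H i2)"
abbreviation "VV \<equiv> {..<nV H} - {m}"
abbreviation "pp \<equiv> F2 \<circ> inv_into VV F1"

lemma i1l: "i1 < length (edgs H)" using i12 i2l by simp

lemma a1: "ea H i1 < nV H" "eb H i1 < nV H" using ea_lt[OF bH i1l] eb_lt[OF bH i1l] .
lemma a2: "ea H i2 < nV H" "eb H i2 < nV H" using ea_lt[OF bH i2l] eb_lt[OF bH i2l] .

lemma b1: "bij_betw F1 VV {..<nV H - 1}" using cmap_bij[OF a1 ne1 m1] .
lemma b2: "bij_betw F2 VV {..<nV H - 1}" using cmap_bij[OF a2 ne2 m2] .

lemma pp_bij: "bij_betw pp {..<nV H - 1} {..<nV H - 1}"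
  using bij_betw_trans[OF bij_betw_inv_into[OF b1] b2] .

lemma pp_F1: "x \<in> VV \<Longrightarrow> pp (F1 x) = F2 x"
  using b1 by (simp add: bij_betw_imp_inj_on inv_into_f_f)

definition "u1 = (if m = ea H i1 then eb H i1 else ea H i1)"
definition "u2 = (if m = ea H i2 then eb H i2 else ea H i2)"

lemma u1: "u1 \<in> VV" "ends (edgs H ! i1) = {m, u1}" "F1 m = F1 u1"
  using a1 ne1 m1 cmap_ab[of "ea H i1" "eb H i1"] by (auto simp: u1_def ends_def ea_def eb_def)
lemma u2: "u2 \<in> VV" "ends (edgs H ! i2) = {m, u2}" "F2 m = F2 u2"
  using a2 ne2 m2 cmap_ab[of "ea H i2" "eb H i2"] by (auto simp: u2_def ends_def ea_def eb_def)

lemma pp_F1m: "pp (F1 m) = F2 u1"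
  using u1 pp_F1 by simp

lemma iso_K: "iso (forget (contract H i1)) (forget (contract H i2)) pp (cyc i1 (i2 - 1))"
proof -
  let ?K1 = "forget (contract H i1)" and ?K2 = "forget (contract H i2)"
  let ?L = "length (edgs H)"
  have nv1: "nV ?K1 = nV H - 1" using nl_nV[OF bH i1l ne1] by simp
  have nv2: "nV ?K2 = nV H - 1" using nl_nV[OF bH i2l ne2] by simp
  have l1: "length (edgs ?K1) = ?L - 1" using len_contract[OF bH i1l] by simp
  have l2: "length (edgs ?K2) = ?L - 1" using len_contract[OF bH i2l] by simp
  have perm: "cyc i1 (i2 - 1) permutes {..<?L - 1}" by (rule cyc_permutes) (use i12 i2l in auto)
  have wt: "\<forall>v < nV ?K1. wt ?K2 (pp v) = wt ?K1 v"
  proof (intro allI impI)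
    fix v assume "v < nV ?K1"
    then obtain x where x: "x \<in> VV" "v = F1 x" using b1 nv1 by (metis bij_betw_imp_surj_on imageE lessThan_iff)
    have "wt ?K1 v = wt H x" using wt_contract_m[OF bH i1l ne1 m1 w0] x by auto
    moreover have "wt ?K2 (pp v) = wt H x" using wt_contract_m[OF bH i2l ne2 m2 w0] x pp_F1 by auto
    ultimately show "wt ?K2 (pp v) = wt ?K1 v" by simp
  qed
  have gen: "pp ` F1 ` A = F2 ` A" if "A \<subseteq> VV" for A
  proof -
    have "pp ` F1 ` A = (\<lambda>x. pp (F1 x)) ` A" by (simp only: image_image)
    also have "\<dots> = F2 ` A" by (rule image_cong) (use that pp_F1 in auto)
    finally show ?thesis .
  qed
  have ed: "\<forall>r < length (edgs ?K1). ends (edgs ?K2 ! cyc i1 (i2 - 1) r) = pp ` ends (edgs ?K1 ! r)"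
  proof (intro allI impI)
    fix r assume r: "r < length (edgs ?K1)"
    then have r': "r < ?L - 1" using l1 by simp
    have sr: "cyc i1 (i2 - 1) r < ?L - 1" using permutes_in_image[OF perm, of r] r' by simp
    have e1: "ends (edgs ?K1 ! r) = F1 ` ends (edgs H ! (if r < i1 then r else Suc r))"
      using ends_contract_nl[OF bH i1l ne1 r'] by simp
    have e2: "ends (edgs ?K2 ! cyc i1 (i2 - 1) r) = F2 ` ends (edgs H ! (if cyc i1 (i2 - 1) r < i2 then cyc i1 (i2 - 1) r else Suc (cyc i1 (i2 - 1) r)))"
      using ends_contract_nl[OF bH i2l ne2 sr] by simp
    show "ends (edgs ?K2 ! cyc i1 (i2 - 1) r) = pp ` ends (edgs ?K1 ! r)"
    proof (cases "r = i2 - 1")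
      case True
      then have "(if r < i1 then r else Suc r) = i2" "cyc i1 (i2 - 1) r = i1" using i12 by (auto simp: cyc_def)
      then have "ends (edgs ?K1 ! r) = F1 ` {m, u2}" "ends (edgs ?K2 ! cyc i1 (i2 - 1) r) = F2 ` {m, u1}"
        using e1 e2 u1 u2 i12 by auto
      then show ?thesis using pp_F1m pp_F1[OF u2(1)] u2(3) by auto
    next
      case False
      define j where "j = (if r < i1 then r else Suc r)"
      have jc: "(if cyc i1 (i2 - 1) r < i2 then cyc i1 (i2 - 1) r else Suc (cyc i1 (i2 - 1) r)) = j"
        using False i12 by (auto simp: cyc_def j_def)
      have jl: "j < ?L" "j \<noteq> i1" "j \<noteq> i2" using r' False i12 by (auto simp: j_def)
      have "ends (edgs H ! j) \<subseteq> VV" using ends_sub[OF bH jl(1)] oth jl by auto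
      then show ?thesis using e1 e2 jc gen unfolding j_def by simp
    qed
  qed
  show ?thesis unfolding iso_def
    using nv1 nv2 l1 l2 perm wt ed pp_bij by simp
qed

end


lemma sum_one:
  assumes "finite A" "(\<Sum>x\<in>A. f x) = (1::nat)"
  shows "\<exists>x\<in>A. f x = 1 \<and> (\<forall>y\<in>A. y \<noteq> x \<longrightarrow> f y = 0)"
proof -
  obtain x where x: "x \<in> A" "f x \<noteq> 0" using assms by (metis sum.neutral zero_neq_one)
  have "f x \<le> 1" using member_le_sum[of x A f] x assms by simp
  then have fx: "f x = 1" using x by simp
  have "(\<Sum>y\<in>A - {x}. f y) = 0" using sum.remove[OF assms(1) x(1), of f] assms fx by simp
  then have "\<forall>y\<in>A - {x}. f y = 0" using assms(1) by simp
  then show ?thesis using x fx by blast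
qed

lemma hc1: "hc e m = 1 \<Longrightarrow> fst e \<noteq> snd e \<and> m \<in> {fst e, snd e}"
  unfolding hc_def by (cases "fst e = m"; cases "snd e = m") simp_all

lemma hc0: "hc e m = 0 \<Longrightarrow> m \<notin> ends e"
  unfolding hc_def ends_def by (cases "fst e = m"; cases "snd e = m") simp_all

lemma isolated:
  assumes v: "valid g 1 H" and mn: "m < nV H" and no: "\<forall>k<length (edgs H). hc (edgs H ! k) m \<noteq> 1"
  shows "nV H = 1"
proof -
  have fs1: "snd e = m" if ee: "e \<in> set (edgs H)" "fst e = m" for e
  proof -
    obtain k where k: "k < length (edgs H)" "edgs H ! k = e" using ee(1) by (auto simp: in_set_conv_nth)
    have "hc e m \<noteq> 1" using no k by blast
    then show ?thesis using ee(2) unfolding hc_def by (cases "fst e = m"; cases "snd e = m") simp_all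
  qed
  have fs2: "fst e = m" if ee: "e \<in> set (edgs H)" "snd e = m" for e
  proof -
    obtain k where k: "k < length (edgs H)" "edgs H ! k = e" using ee(1) by (auto simp: in_set_conv_nth)
    have "hc e m \<noteq> 1" using no k by blast
    then show ?thesis using ee(2) unfolding hc_def by (cases "fst e = m"; cases "snd e = m") simp_all
  qed
  have stepm: "z = m" if "(m, z) \<in> adj H" for z
    using that fs1 fs2 unfolding adj_def by force
  have path: "(x, y) \<in> (adj H)\<^sup>* \<Longrightarrow> x = m \<Longrightarrow> y = m" for x y
  proof (induction rule: rtrancl_induct)
    case base then show ?case by simp
  next
    case (step y z) then show ?case using stepm by auto
  qed
  have conn: "\<forall>u<nV H. (0, u) \<in> (adj H)\<^sup>*" using v by (simp add: valid_def gconnected_def)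
  have all: "u = m" if "u < nV H" for u
  proof -
    have "(m, 0) \<in> (adj H)\<^sup>*" using conn mn adj_rtrancl_sym by blast
    moreover have "(0, u) \<in> (adj H)\<^sup>*" using conn that by blast
    ultimately have "(m, u) \<in> (adj H)\<^sup>*" by (rule rtrancl_trans)
    then show ?thesis using path by blast
  qed
  have "nV H \<ge> 1" using v by (simp add: valid_def)
  moreover have "\<not> nV H \<ge> 2" using all[of 0] all[of 1] by auto
  ultimately show ?thesis by simp
qed

lemma single_vertex:
  assumes v: "valid g 1 H" and n1: "nV H = 1" and q3: "q H 0 \<le> 3"
  shows "g \<le> 1"
proof -
  have b: "bnds H" using valid_bnds[OF v] .
  have e0: "\<forall>e\<in>set (edgs H). fst e = 0 \<and> snd e = 0" using b n1 by (auto simp: bnds_def)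
  have "vE H 0 = 2 * length (edgs H)"
  proof -
    have "filter (\<lambda>e. fst e = 0) (edgs H) = edgs H" "filter (\<lambda>e. snd e = 0) (edgs H) = edgs H"
      using e0 by (auto simp: filter_id_conv)
    then show ?thesis by (simp add: vE_def)
  qed
  moreover have "sum_list (wts H) = wt H 0"
  proof -
    have "length (wts H) = 1" using n1 by (simp add: nV_def)
    then obtain w where "wts H = [w]" by (metis One_nat_def length_0_conv length_Suc_conv)
    then show ?thesis by (simp add: wt_def)
  qed
  moreover have "length (edgs H) + 1 + sum_list (wts H) = g + nV H" using v unfolding valid_def by blast
  ultimately show ?thesis using q3 n1 by (simp add: q_def val_split)
qed

lemma lin_sgen_dgen: "lin sgen (dgen G) = (\<lambda>y. \<Sum>i<length (edgs G). (-1)^i * sgen (contract G i) y)"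
  unfolding dgen_def
  using lin_sum[of "{..<length (edgs G)}" "\<lambda>i. delta (contract G i)" sgen "\<lambda>i. (-1)^i"]
  by (simp add: fs_delta lin_delta)

lemma sgen_q: "sgen K = (if 3 < q K (hd (mks K)) then delta (forget K) else (\<lambda>_. 0))"
  by (simp add: sgen_def q_def)

lemma S4:
  assumes v: "valid g 1 H" and len: "length (edgs H) = Suc e" and g2: "2 \<le> g"
  shows "(\<lambda>y. lin sgen (dgen H) y - lin dgen (sgen H) y) \<in> rels g 0 e"
proof -
  let ?m = "hd (mks H)" and ?L = "length (edgs H)"
  have bH: "bnds H" using valid_bnds[OF v] .
  have mk: "mks H = [?m]" using valid1_mks[OF v] .
  have "?m \<in> set (mks H)" using mk by (metis list.set_intros(1))
  then have mn: "?m < nV H" using v unfolding valid_def by blast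
  have qq: "\<forall>u<nV H. q H u > 2" using v by (simp add: valid_def q_def)
  have hdK: "hd (mks (contract H i)) = cf H i ?m" for i
    using mk by (metis list.map(1) list.map(2) list.sel(1) mks_contract)
  have qK: "q (contract H i) (cf H i ?m) = q H ?m" if i: "i < ?L" "?m \<notin> ends (edgs H ! i)" for i
  proof (cases "ea H i = eb H i")
    case True then show ?thesis using q_lp[OF bH i(1) True mn] by (simp add: cf_def)
  next
    case False
    have "?m \<notin> {ea H i, eb H i}" using i(2) by (simp add: ends_def ea_def eb_def)
    then show ?thesis using q_nl_point[OF bH i(1) False mn] False by (simp add: cf_def)
  qed
  have qK2: "q (contract H i) (cf H i ?m) > q H ?m" if i: "i < ?L" "ea H i \<noteq> eb H i" "?m \<in> {ea H i, eb H i}" for i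
  proof -
    have a: "ea H i < nV H" "eb H i < nV H" using ea_lt[OF bH i(1)] eb_lt[OF bH i(1)] .
    have "q (contract H i) (cmap (ea H i) (eb H i) ?m) + 2 = q H (ea H i) + q H (eb H i)"
      using q_nl_point[OF bH i(1) i(2) mn] i(3) by simp
    then show ?thesis using i qq[rule_format, OF a(1)] qq[rule_format, OF a(2)] by (auto simp: cf_def)
  qed
  have qKge: "q (contract H i) (cf H i ?m) \<ge> q H ?m" if i: "i < ?L" for i
  proof (cases "ea H i \<noteq> eb H i \<and> ?m \<in> {ea H i, eb H i}")
    case True then show ?thesis using qK2[OF i] by auto
  next
    case False
    then have "?m \<notin> ends (edgs H ! i) \<or> ea H i = eb H i" by (auto simp: ends_def ea_def eb_def)
    then show ?thesis
    proof
      assume "?m \<notin> ends (edgs H ! i)" then show ?thesis using qK[OF i] by simp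
    next
      assume eq: "ea H i = eb H i"
      then show ?thesis using q_lp[OF bH i eq mn] by (simp add: cf_def)
    qed
  qed
  have dg: "lin sgen (dgen H) = (\<lambda>y. \<Sum>i<?L. (-1)^i * sgen (contract H i) y)" by (rule lin_sgen_dgen)
  show ?thesis
  proof (cases "3 < q H ?m")
    case True
    have sK: "sgen (contract H i) = delta (forget (contract H i))" if "i < ?L" for i
      using qKge[OF that] True by (simp add: sgen_q hdK)
    have sH: "sgen H = delta (forget H)" using True by (simp add: sgen_q)
    have "lin dgen (sgen H) = (\<lambda>y. \<Sum>i<?L. (-1)^i * delta (forget (contract H i)) y)"
      by (simp add: sH lin_delta dgen_def contract_forget)
    moreover have "lin sgen (dgen H) = (\<lambda>y. \<Sum>i<?L. (-1)^i * delta (forget (contract H i)) y)"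
      unfolding dg by (rule ext, rule sum.cong) (auto simp: sK)
    ultimately show ?thesis by (simp add: rels_def qspan_zero)
  next
    case False
    then have q3: "q H ?m \<le> 3" by simp
    have ex1: "\<exists>k<?L. hc (edgs H ! k) ?m = 1"
    proof (rule ccontr)
      assume "\<not> ?thesis"
      then have "nV H = 1" using isolated[OF v mn] by auto
      then have "?m = 0" using mn by simp
      then have "g \<le> 1" using single_vertex[OF v \<open>nV H = 1\<close>] q3 by simp
      then show False using g2 by simp
    qed
    then obtain k1 where k1: "k1 < ?L" "hc (edgs H ! k1) ?m = 1" by blast
    have vEs: "vE H ?m = (\<Sum>k<?L. hc (edgs H ! k) ?m)" by (rule vE_hc)
    have "vE H ?m \<ge> 1" using vEs k1 member_le_sum[of k1 "{..<?L}" "\<lambda>k. hc (edgs H ! k) ?m"] by simp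
    moreover have "q H ?m = 2 * wt H ?m + vE H ?m + 1" using valid1_vM[OF v, of ?m] by (simp add: q_def val_split)
    moreover have "q H ?m > 2" using qq mn by blast
    ultimately have t2: "2 * wt H ?m + vE H ?m = 2" "vE H ?m \<ge> 1" using q3 by auto
    then have w0: "wt H ?m = 0" and vE2: "vE H ?m = 2" by presburger+
    have "(\<Sum>k\<in>{..<?L} - {k1}. hc (edgs H ! k) ?m) = 1"
      using sum.remove[of "{..<?L}" k1 "\<lambda>k. hc (edgs H ! k) ?m"] k1 vEs vE2 by simp
    then obtain k2 where k2: "k2 \<in> {..<?L} - {k1}" "hc (edgs H ! k2) ?m = 1"
      and rest: "\<forall>y\<in>{..<?L} - {k1}. y \<noteq> k2 \<longrightarrow> hc (edgs H ! y) ?m = 0"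
      using sum_one[of "{..<?L} - {k1}" "\<lambda>k. hc (edgs H ! k) ?m"] by auto
    define i1 where "i1 = min k1 k2"
    define i2 where "i2 = max k1 k2"
    have i12: "i1 < i2" using k2 by (auto simp: i1_def i2_def)
    have i2l: "i2 < ?L" and i1l: "i1 < ?L" using k1 k2 by (auto simp: i1_def i2_def)
    have h1: "hc (edgs H ! i1) ?m = 1" and h2: "hc (edgs H ! i2) ?m = 1" using k1 k2 by (auto simp: i1_def i2_def min_def max_def)
    have ne1: "ea H i1 \<noteq> eb H i1" and m1: "?m \<in> {ea H i1, eb H i1}" using hc1[OF h1] by (auto simp: ea_def eb_def)
    have ne2: "ea H i2 \<noteq> eb H i2" and m2: "?m \<in> {ea H i2, eb H i2}" using hc1[OF h2] by (auto simp: ea_def eb_def)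
    have oth: "\<forall>k<?L. k \<noteq> i1 \<longrightarrow> k \<noteq> i2 \<longrightarrow> ?m \<notin> ends (edgs H ! k)"
    proof (intro allI impI)
      fix k assume "k < ?L" "k \<noteq> i1" "k \<noteq> i2"
      then have "k \<noteq> k1" "k \<noteq> k2" by (auto simp: i1_def i2_def min_def max_def split: if_splits)
      then have "hc (edgs H ! k) ?m = 0" using rest \<open>k < ?L\<close> by auto
      then show "?m \<notin> ends (edgs H ! k)" by (rule hc0)
    qed
    let ?K1 = "forget (contract H i1)" and ?K2 = "forget (contract H i2)"
    have s1: "sgen (contract H i1) = delta ?K1" using qK2[OF i1l ne1 m1] q3 qq[rule_format, OF mn] by (simp add: sgen_q hdK)
    have s2: "sgen (contract H i2) = delta ?K2" using qK2[OF i2l ne2 m2] q3 qq[rule_format, OF mn] by (simp add: sgen_q hdK)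
    have s0: "sgen (contract H i) = (\<lambda>_. 0)" if "i < ?L" "i \<noteq> i1" "i \<noteq> i2" for i
      using qK[OF that(1)] oth that q3 by (simp add: sgen_q hdK)
    have sH: "sgen H = (\<lambda>_. 0)" using False by (simp add: sgen_q)
    have sum2: "lin sgen (dgen H) y = (-1)^i1 * delta ?K1 y + (-1)^i2 * delta ?K2 y" for y
    proof -
      have "lin sgen (dgen H) y = (\<Sum>i\<in>{i1, i2}. (-1)^i * sgen (contract H i) y)"
        unfolding dg by (rule sum.mono_neutral_right) (use i1l i2l s0 in auto)
      then show ?thesis using i12 s1 s2 by simp
    qed
    have vK1: "valid g 0 ?K1"
      by (rule valid_forget[OF valid_contract_nl[OF v i1l ne1]]) (use qK2[OF i1l ne1 m1] q3 qq mn hdK in \<open>auto simp: q_def\<close>)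
    have lK1: "length (edgs ?K1) = e" using len_contract[OF bH i1l] len by simp
    have isoK: "iso ?K1 ?K2 (cmap (ea H i2) (eb H i2) \<circ> inv_into ({..<nV H} - {?m}) (cmap (ea H i1) (eb H i1))) (cyc i1 (i2 - 1))"
      by (rule iso_K[OF bH i12 i2l ne1 ne2 m1 m2 oth w0 mn])
    have sg: "sign (cyc i1 (i2 - 1)) = (-1) ^ (i2 - 1 - i1)" using cyc_sign[of i1 "i2 - 1"] i12 by simp
    have ex: "i2 = Suc (i1 + (i2 - 1 - i1))" using i12 by arith
    have sgq: "(of_int (sign (cyc i1 (i2 - 1)))::rat) = (-1::rat)^(i2 - 1 - i1)" using sg by simp
    have e2: "(-1::rat)^i2 = (-1)^i1 * (- ((-1)^(i2 - 1 - i1)))"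
    proof -
      have "(-1::rat)^(Suc (i1 + (i2 - 1 - i1))) = (-1)^i1 * (- ((-1)^(i2 - 1 - i1)))" by (simp add: power_add)
      then show ?thesis using ex by metis
    qed
    have pw: "(-1::rat)^i2 = (-1)^i1 * (- (of_int (sign (cyc i1 (i2 - 1)))))"
      unfolding sgq by (rule e2)
    have "(\<lambda>y. lin sgen (dgen H) y - lin dgen (sgen H) y)
        = (\<lambda>y. (-1)^i1 * (delta ?K1 y - of_int (sign (cyc i1 (i2 - 1))) * delta ?K2 y))"
      by (rule ext) (simp add: sum2 sH lin_zero pw algebra_simps)
    also have "\<dots> \<in> rels g 0 e"
      unfolding rels_def
    proof (rule qspan_scale, rule qspan_base, rule CollectI, intro exI conjI)
      show "valid g 0 ?K1" by (rule vK1)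
      show "length (edgs ?K1) = e" by (rule lK1)
      show "iso ?K1 ?K2 (cmap (ea H i2) (eb H i2) \<circ> inv_into ({..<nV H} - {?m}) (cmap (ea H i1) (eb H i1))) (cyc i1 (i2 - 1))" by (rule isoK)
    qed (rule refl)
    finally show ?thesis .
  qed
qed


lemma lin_scaleF: "lin (\<lambda>x y. c * F x y) z = (\<lambda>y. c * lin F z y)"
  unfolding lin_def by (rule ext) (simp add: sum_distrib_left algebra_simps)

lemma lin_diffF: "lin (\<lambda>x y. A x y - B x y) z = (\<lambda>y. lin A z y - lin B z y)"
  unfolding lin_def by (rule ext) (simp add: sum_subtractf algebra_simps)

lemma supp_chains: "c \<in> chains g n e \<Longrightarrow> supp c \<subseteq> {G. valid g n G \<and> length (edgs G) = e}"
  using supp_qspan_delta[of c "\<lambda>G. valid g n G \<and> length (edgs G) = e"] unfolding chains_def by simp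

lemma ST:
  assumes z: "z \<in> chains g 0 e"
  shows "lin sgen (lin tgen z) = (\<lambda>y. (2 * of_nat g - 2) * z y)"
proof -
  have f: "fs z" using fs_chains[OF z] .
  have "lin sgen (lin tgen z) = lin (\<lambda>x. lin sgen (tgen x)) z" using lin2[OF f] fs_tgen by blast
  also have "\<dots> = lin (\<lambda>x y. (2 * of_nat g - 2) * delta x y) z"
    by (rule lin_cong) (use supp_chains[OF z] sgen_tgen in blast)
  also have "\<dots> = (\<lambda>y. (2 * of_nat g - 2) * lin delta z y)" by (rule lin_scaleF)
  also have "\<dots> = (\<lambda>y. (2 * of_nat g - 2) * z y)" using lin_delta_id[OF f] by simp
  finally show ?thesis .
qed

lemma KI:
  assumes b: "b \<in> chains g 1 (Suc e)" and g2: "2 \<le> g"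
  shows "(\<lambda>y. lin sgen (lin dgen b) y - lin dgen (lin sgen b) y) \<in> rels g 0 e"
proof -
  have f: "fs b" using fs_chains[OF b] .
  have "(\<lambda>y. lin sgen (lin dgen b) y - lin dgen (lin sgen b) y)
      = (\<lambda>y. lin (\<lambda>x. lin sgen (dgen x)) b y - lin (\<lambda>x. lin dgen (sgen x)) b y)"
    using lin2[OF f, of dgen sgen] lin2[OF f, of sgen dgen] fs_dgen fs_sgen by simp
  also have "\<dots> = lin (\<lambda>x y. lin sgen (dgen x) y - lin dgen (sgen x) y) b" by (rule lin_diffF[symmetric])
  also have "\<dots> \<in> rels g 0 e"
    using b unfolding chains_def rels_def
  proof (rule lin_qspan)
    fix x assume "x \<in> {delta G |G. valid g 1 G \<and> length (edgs G) = Suc e}"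
    then obtain G where x: "x = delta G" "valid g 1 G" "length (edgs G) = Suc e" by blast
    show "fs x" unfolding x(1) by (rule fs_delta)
    show "lin (\<lambda>x y. lin sgen (dgen x) y - lin dgen (sgen x) y) x
      \<in> qspan {\<lambda>y. delta G y - of_int (sign s) * delta G' y |G G' p s. valid g 0 G \<and> length (edgs G) = e \<and> iso G G' p s}"
      unfolding x(1) lin_delta using S4[OF x(2,3) g2, unfolded rels_def] .
  qed
  finally show ?thesis .
qed

lemma sgen_maps:
  shows "c \<in> chains g 1 e \<Longrightarrow> lin sgen c \<in> chains g 0 e"
    and "c \<in> rels g 1 e \<Longrightarrow> lin sgen c \<in> rels g 0 e"
    and "c \<in> posw g 1 e \<Longrightarrow> lin sgen c \<in> posw g 0 e"
proof -
  assume c: "c \<in> chains g 1 e"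
  then show "lin sgen c \<in> chains g 0 e" unfolding chains_def
  proof (rule lin_qspan)
    fix x assume "x \<in> {delta G |G. valid g 1 G \<and> length (edgs G) = e}"
    then obtain G where x: "x = delta G" "valid g 1 G" "length (edgs G) = e" by blast
    show "fs x" unfolding x(1) by (rule fs_delta)
    show "lin sgen x \<in> qspan {delta G |G. valid g 0 G \<and> length (edgs G) = e}"
      unfolding x(1) lin_delta using sgen_chains[OF x(2,3), unfolded chains_def] .
  qed
next
  assume c: "c \<in> posw g 1 e"
  then show "lin sgen c \<in> posw g 0 e" unfolding posw_def
  proof (rule lin_qspan)
    fix x assume "x \<in> {delta G |G. valid g 1 G \<and> length (edgs G) = e \<and> (\<exists>v<nV G. wt G v > 0)}"
    then obtain G where x: "x = delta G" "valid g 1 G" "length (edgs G) = e" "\<exists>v<nV G. wt G v > 0" by blast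
    show "fs x" unfolding x(1) by (rule fs_delta)
    show "lin sgen x \<in> qspan {delta G |G. valid g 0 G \<and> length (edgs G) = e \<and> (\<exists>v<nV G. wt G v > 0)}"
      unfolding x(1) lin_delta using sgen_posw[OF x(2,3,4), unfolded posw_def] .
  qed
next
  assume c: "c \<in> rels g 1 e"
  then show "lin sgen c \<in> rels g 0 e" unfolding rels_def
  proof (rule lin_qspan)
    fix x assume "x \<in> {\<lambda>y. delta G y - of_int (sign s) * delta G' y |G G' p s. valid g 1 G \<and> length (edgs G) = e \<and> iso G G' p s}"
    then obtain G G' p s where x: "x = (\<lambda>y. delta G y - of_int (sign s) * delta G' y)"
      "valid g 1 G" "length (edgs G) = e" "iso G G' p s" by blast
    have "lin sgen x = (\<lambda>y. sgen G y - of_int (sign s) * sgen G' y)"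
      unfolding x(1) by (simp add: lin_diff fs_delta fs_scale lin_scale lin_delta)
    then show "lin sgen x \<in> qspan {\<lambda>y. delta G y - of_int (sign s) * delta G' y |G G' p s. valid g 0 G \<and> length (edgs G) = e \<and> iso G G' p s}"
      using sgen_rels[OF x(2-4), unfolded rels_def] by simp
    show "fs x" unfolding x(1) using fs_add[OF fs_delta fs_scale[OF fs_delta, of "- of_int (sign s)"]] by simp
  qed
qed

lemma fs_rels: "c \<in> rels g n e \<Longrightarrow> fs c"
  unfolding rels_def
proof (rule qspan_fs)
  fix x assume "x \<in> {\<lambda>y. delta G y - of_int (sign s) * delta G' y |G G' p s. valid g n G \<and> length (edgs G) = e \<and> iso G G' p s}"
  then obtain G G' p s where x: "x = (\<lambda>y. delta G y - of_int (sign s) * delta G' y)" "valid g n G" "iso G G' p s" by blast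
  show "fs x" unfolding x(1) using fs_add[OF fs_delta fs_scale[OF fs_delta, of "- of_int (sign s)"]] by simp
qed

lemma fs_posw: "c \<in> posw g n e \<Longrightarrow> fs c"
  unfolding posw_def
proof (rule qspan_fs)
  fix x assume "x \<in> {delta G |G. valid g n G \<and> length (edgs G) = e \<and> (\<exists>v<nV G. wt G v > 0)}"
  then obtain G where "x = delta G" by blast
  then show "fs x" using fs_delta by simp
qed

lemma core:
  assumes g2: "2 \<le> g" and z: "z \<in> chains g 0 e" and b: "b \<in> chains g 1 (Suc e)" and fr: "fs r"
    and eq: "lin tgen z = (\<lambda>y. lin dgen b y + r y)"
  shows "\<exists>b0 \<in> chains g 0 (Suc e). \<exists>\<rho> \<in> rels g 0 e.
           z = (\<lambda>y. lin dgen b0 y + (\<rho> y + (1 / (2 * of_nat g - 2)) * lin sgen r y))"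
proof -
  define c :: rat where "c = 2 * of_nat g - 2"
  have c0: "c \<noteq> 0" using g2 by (simp add: c_def)
  have fb: "fs b" using fs_chains[OF b] .
  have fdb: "fs (lin dgen b)" using lin_fs[OF fb fs_dgen] .
  have "(\<lambda>y. c * z y) = lin sgen (lin tgen z)" using ST[OF z] by (simp add: c_def)
  also have "\<dots> = (\<lambda>y. lin sgen (lin dgen b) y + lin sgen r y)" unfolding eq by (rule lin_add[OF fdb fr])
  finally have cz: "(\<lambda>y. c * z y) = (\<lambda>y. lin sgen (lin dgen b) y + lin sgen r y)" .
  define b' where "b' = lin sgen b"
  have b'c: "b' \<in> chains g 0 (Suc e)" unfolding b'_def using sgen_maps(1)[OF b] .
  have fb': "fs b'" using fs_chains[OF b'c] .
  define \<rho> where "\<rho> = (\<lambda>y. lin sgen (lin dgen b) y - lin dgen b' y)"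
  have \<rho>r: "\<rho> \<in> rels g 0 e" unfolding \<rho>_def b'_def using KI[OF b g2] .
  define b0 where "b0 = (\<lambda>y. (1 / c) * b' y)"
  have b0c: "b0 \<in> chains g 0 (Suc e)" unfolding b0_def chains_def using b'c unfolding chains_def by (rule qspan_scale)
  have db0: "lin dgen b0 = (\<lambda>y. (1 / c) * lin dgen b' y)" unfolding b0_def by (rule lin_scale[OF fb'])
  have \<rho>'r: "(\<lambda>y. (1 / c) * \<rho> y) \<in> rels g 0 e" using \<rho>r unfolding rels_def by (rule qspan_scale)
  have "z = (\<lambda>y. lin dgen b0 y + ((1 / c) * \<rho> y + (1 / c) * lin sgen r y))"
  proof
    fix y
    have "c * z y = lin sgen (lin dgen b) y + lin sgen r y" using fun_cong[OF cz, of y] by simp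
    then have "z y = (1 / c) * (lin sgen (lin dgen b) y + lin sgen r y)" using c0 by (simp add: field_simps)
    then show "z y = lin dgen b0 y + ((1 / c) * \<rho> y + (1 / c) * lin sgen r y)"
      unfolding db0 \<rho>_def by (simp add: algebra_simps)
  qed
  then have zz: "z = (\<lambda>y. lin dgen b0 y + ((\<lambda>y. (1 / c) * \<rho> y) y + (1 / c) * lin sgen r y))" by simp
  show ?thesis
  proof (rule bexI[where x=b0], rule bexI[where x="\<lambda>y. (1 / c) * \<rho> y"])
    show "z = (\<lambda>y. lin dgen b0 y + ((\<lambda>y. (1 / c) * \<rho> y) y + 1 / (2 * of_nat g - 2) * lin sgen r y))"
      using zz by (simp add: c_def)
  qed (use b0c \<rho>'r in auto)
qed


lemma saddI: "x \<in> A \<Longrightarrow> z \<in> B \<Longrightarrow> c = (\<lambda>y. x y + z y) \<Longrightarrow> c \<in> sadd A B"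
  unfolding sadd_def by blast

lemma saddE: "c \<in> sadd A B \<Longrightarrow> (\<And>x z. x \<in> A \<Longrightarrow> z \<in> B \<Longrightarrow> c = (\<lambda>y. x y + z y) \<Longrightarrow> P) \<Longrightarrow> P"
  unfolding sadd_def by blast

lemma claim5:
  assumes g2: "2 \<le> g" and z: "z \<in> chains g 0 e" and h: "lin tgen z \<in> sadd (bnd g 1 e) (rels g 1 e)"
  shows "z \<in> sadd (bnd g 0 e) (rels g 0 e)"
proof -
  obtain \<beta> r where \<beta>: "\<beta> \<in> bnd g 1 e" and r: "r \<in> rels g 1 e" and eq: "lin tgen z = (\<lambda>y. \<beta> y + r y)"
    using h by (rule saddE)
  obtain b where b: "b \<in> chains g 1 (Suc e)" "\<beta> = lin dgen b" using \<beta> unfolding bnd_def by blast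
  obtain b0 \<rho> where b0: "b0 \<in> chains g 0 (Suc e)" and \<rho>: "\<rho> \<in> rels g 0 e"
    and zz: "z = (\<lambda>y. lin dgen b0 y + (\<rho> y + (1 / (2 * of_nat g - 2)) * lin sgen r y))"
    using core[OF g2 z b(1) fs_rels[OF r]] eq b(2) by blast
  show ?thesis
  proof (rule saddI[OF _ _ zz])
    show "lin dgen b0 \<in> bnd g 0 e" unfolding bnd_def using b0 by blast
    show "(\<lambda>y. \<rho> y + 1 / (2 * of_nat g - 2) * lin sgen r y) \<in> rels g 0 e"
      using \<rho> sgen_maps(2)[OF r] unfolding rels_def by (intro qspan_add qspan_scale)
  qed
qed

lemma claim6:
  assumes g2: "2 \<le> g" and z: "z \<in> chains g 0 e"
    and h: "lin tgen z \<in> sadd (sadd (bnd g 1 e) (rels g 1 e)) (posw g 1 e)"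
  shows "z \<in> sadd (sadd (bnd g 0 e) (rels g 0 e)) (posw g 0 e)"
proof -
  obtain w p where w: "w \<in> sadd (bnd g 1 e) (rels g 1 e)" and p: "p \<in> posw g 1 e" and eq: "lin tgen z = (\<lambda>y. w y + p y)"
    using h by (rule saddE)
  obtain \<beta> r where \<beta>: "\<beta> \<in> bnd g 1 e" and r: "r \<in> rels g 1 e" and eqw: "w = (\<lambda>y. \<beta> y + r y)"
    using w by (rule saddE)
  obtain b where b: "b \<in> chains g 1 (Suc e)" "\<beta> = lin dgen b" using \<beta> unfolding bnd_def by blast
  have fr: "fs r" using fs_rels[OF r] .
  have fp: "fs p" using fs_posw[OF p] .
  have eq2: "lin tgen z = (\<lambda>y. lin dgen b y + (r y + p y))" using eq eqw b(2) by (simp add: add.assoc)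
  obtain b0 \<rho> where b0: "b0 \<in> chains g 0 (Suc e)" and \<rho>: "\<rho> \<in> rels g 0 e"
    and zz: "z = (\<lambda>y. lin dgen b0 y + (\<rho> y + (1 / (2 * of_nat g - 2)) * lin sgen (\<lambda>y. r y + p y) y))"
    using core[OF g2 z b(1) fs_add[OF fr fp] eq2] by blast
  have ls: "lin sgen (\<lambda>y. r y + p y) = (\<lambda>y. lin sgen r y + lin sgen p y)" by (rule lin_add[OF fr fp])
  let ?c = "1 / (2 * of_nat g - 2) :: rat"
  have zz2: "z = (\<lambda>y. (\<lambda>y. lin dgen b0 y + (\<rho> y + ?c * lin sgen r y)) y + ?c * lin sgen p y)"
    using zz ls by (simp add: algebra_simps add_divide_distrib)
  show ?thesis
  proof (rule saddI[OF _ _ zz2])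
    show "(\<lambda>y. lin dgen b0 y + (\<rho> y + ?c * lin sgen r y)) \<in> sadd (bnd g 0 e) (rels g 0 e)"
    proof (rule saddI[OF _ _ refl])
      show "lin dgen b0 \<in> bnd g 0 e" unfolding bnd_def using b0 by blast
      show "(\<lambda>y. \<rho> y + ?c * lin sgen r y) \<in> rels g 0 e"
        using \<rho> sgen_maps(2)[OF r] unfolding rels_def by (intro qspan_add qspan_scale)
    qed
    show "(\<lambda>y. ?c * lin sgen p y) \<in> posw g 0 e"
      using sgen_maps(3)[OF p] unfolding posw_def by (rule qspan_scale)
  qed
qed

theorem theorem1p7:
  fixes g :: nat
  assumes "g \<ge> 2"
  shows "(\<forall>e. lin tgen ` chains g 0 e \<subseteq> chains g 1 e)
       \<and> (\<forall>e. lin tgen ` rels g 0 e \<subseteq> rels g 1 e)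
       \<and> (\<forall>e. \<forall>c\<in>chains g 0 (Suc e).
             (\<lambda>y. lin tgen (lin dgen c) y - lin dgen (lin tgen c) y) \<in> rels g 1 e)
       \<and> (\<forall>e. lin tgen ` posw g 0 e \<subseteq> posw g 1 e)
       \<and> (\<forall>e. \<forall>z\<in>chains g 0 e. lin dgen z \<in> rels g 0 (e - 1) \<longrightarrow>
             lin tgen z \<in> sadd (bnd g 1 e) (rels g 1 e) \<longrightarrow>
             z \<in> sadd (bnd g 0 e) (rels g 0 e))
       \<and> (\<forall>e. \<forall>z\<in>chains g 0 e. lin dgen z \<in> sadd (rels g 0 (e - 1)) (posw g 0 (e - 1)) \<longrightarrow>
             lin tgen z \<in> sadd (sadd (bnd g 1 e) (rels g 1 e)) (posw g 1 e) \<longrightarrow>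
             z \<in> sadd (sadd (bnd g 0 e) (rels g 0 e)) (posw g 0 e))"
proof (intro conjI allI ballI impI)
  fix e
  show "lin tgen ` chains g 0 e \<subseteq> chains g 1 e" by (rule claim12(1))
  show "lin tgen ` rels g 0 e \<subseteq> rels g 1 e" by (rule claim12(2))
  show "lin tgen ` posw g 0 e \<subseteq> posw g 1 e" by (rule claim12(3))
next
  fix e c assume "c \<in> chains g 0 (Suc e)"
  then show "(\<lambda>y. lin tgen (lin dgen c) y - lin dgen (lin tgen c) y) \<in> rels g 1 e" by (rule claim3)
next
  fix e z assume "z \<in> chains g 0 e" "lin tgen z \<in> sadd (bnd g 1 e) (rels g 1 e)"
  then show "z \<in> sadd (bnd g 0 e) (rels g 0 e)" by (rule claim5[OF assms])
next
  fix e z assume "z \<in> chains g 0 e" "lin tgen z \<in> sadd (sadd (bnd g 1 e) (rels g 1 e)) (posw g 1 e)"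
  then show "z \<in> sadd (sadd (bnd g 0 e) (rels g 0 e)) (posw g 0 e)" by (rule claim6[OF assms])
qed


end
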